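(* Let $\mathcal{A}$ be a commutative unital complex Banach algebra. An element $a=(a_n)_{n\in\mathbb N}\in\ell^1(\mathbb{N},\mathcal{A})$ is invertible in $\ell^1(\mathbb{N},\mathcal{A})$ if and only if $\widehat{a}(\chi)=\sum_{n\in\mathbb{N}} a_n\chi(n)$ is invertible in $\mathcal{A}$ for every $\chi\in\widehat{\mathbb{N}}$.
   Context: $\ell^1(\mathbb N,\mathcal A)$ is the set of sequences $(a_n)_{n\in\mathbb N}$ in $\mathcal A$ with $\sum_n\|a_n\|<\infty$, a unital Banach algebra under the Dirichlet convolution $(a\star b)_n=\sum_{k,l\in\mathbb N,\,kl=n}a_kb_l$. Regarding $\mathbb N$ as a semigroup under multiplication, a semicharacter is a nonzero bounded map $\chi:\mathbb N\to\mathbb C$ with $\chi(mn)=\chi(m)\chi(n)$ for all $m,n\in\mathbb N$; $\widehat{\mathbb N}$ denotes the set of all semicharacters. *)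

theory Defs
  imports "HOL-Analysis.Analysis"
begin

text \<open>Complex normed unital algebras: a real normed unital algebra equipped with a
  compatible complex scalar multiplication (the library has no complex vector space class).\<close>
class complex_normed_algebra_1 = real_normed_algebra_1 +
  fixes scaleC :: "complex \<Rightarrow> 'a \<Rightarrow> 'a"
  assumes scaleC_add_right: "scaleC c (x + y) = scaleC c x + scaleC c y"
    and scaleC_add_left: "scaleC (c + d) x = scaleC c x + scaleC d x"
    and scaleC_scaleC: "scaleC c (scaleC d x) = scaleC (c * d) x"
    and scaleC_one: "scaleC 1 x = x"
    and scaleC_of_real: "scaleC (complex_of_real r) x = scaleR r x"
    and norm_scaleC: "norm (scaleC c x) = cmod c * norm x"
    and mult_scaleC_left: "scaleC c x * y = scaleC c (x * y)"
    and mult_scaleC_right: "x * scaleC c y = scaleC c (x * y)"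

text \<open>The index set \<open>\<nat> = {1,2,...}\<close> is rendered as \<open>{1..} :: nat set\<close>; elements of
  \<open>\<ell>\<^sup>1(\<nat>,A)\<close> are functions \<open>nat \<Rightarrow> 'a\<close> vanishing at the dummy index 0.\<close>
definition l1 :: "(nat \<Rightarrow> 'a::real_normed_vector) set" where
  "l1 = {a. a 0 = 0 \<and> (\<lambda>n. norm (a n)) summable_on {1..}}"

definition dconv :: "(nat \<Rightarrow> 'a::comm_ring_1) \<Rightarrow> (nat \<Rightarrow> 'a) \<Rightarrow> nat \<Rightarrow> 'a" where
  "dconv a b n = (if n = 0 then 0 else (\<Sum>(k,l)\<in>{(k,l). k * l = n}. a k * b l))"

definition dunit :: "nat \<Rightarrow> 'a::comm_ring_1" where
  "dunit n = (if n = 1 then 1 else 0)"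

definition l1_invertible :: "(nat \<Rightarrow> 'a::{real_normed_vector,comm_ring_1}) \<Rightarrow> bool" where
  "l1_invertible a \<longleftrightarrow> (\<exists>b\<in>l1. dconv a b = dunit \<and> dconv b a = dunit)"

text \<open>Semicharacters of the multiplicative semigroup \<open>\<nat> = {1,2,...}\<close> (values at 0 are irrelevant).\<close>
definition semicharacter :: "(nat \<Rightarrow> complex) \<Rightarrow> bool" where
  "semicharacter chi \<longleftrightarrow> (\<exists>n\<ge>1. chi n \<noteq> 0) \<and> (\<exists>B. \<forall>n\<ge>1. cmod (chi n) \<le> B)
     \<and> (\<forall>m n. m \<ge> 1 \<longrightarrow> n \<ge> 1 \<longrightarrow> chi (m * n) = chi m * chi n)"

definition gtrans :: "(nat \<Rightarrow> 'a::{complex_normed_algebra_1,banach}) \<Rightarrow> (nat \<Rightarrow> complex) \<Rightarrow> 'a" where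
  "gtrans a chi = infsum (\<lambda>n. scaleC (chi n) (a n)) {1..}"

end

theory Submission
  imports Defs
begin


lemma sC_1: "scaleC c x = scaleC c 1 * (x::'a::complex_normed_algebra_1)"
  by (simp add: mult_scaleC_left)

lemma sC_zero [simp]: "scaleC 0 (x::'a::complex_normed_algebra_1) = 0"
  using scaleC_of_real[of 0 x] by simp

lemma sC_mult1: "scaleC (c*d) (1::'a::complex_normed_algebra_1) = scaleC c 1 * scaleC d 1"
  by (metis sC_1 scaleC_scaleC)

lemma sC_add1: "scaleC (c+d) (1::'a::complex_normed_algebra_1) = scaleC c 1 + scaleC d 1"
  by (simp add: scaleC_add_left)

lemma sC_uminus1: "scaleC (-c) (1::'a::complex_normed_algebra_1) = - scaleC c 1"
  using sC_add1[of c "-c", where 'a='a] by (simp add: eq_neg_iff_add_eq_0 add.commute)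

lemma sC_diff1: "scaleC (c-d) (1::'a::complex_normed_algebra_1) = scaleC c 1 - scaleC d 1"
  using sC_add1[of c "-d", where 'a='a] sC_uminus1[of d, where 'a='a] by simp

lemma sC_one1 [simp]: "scaleC 1 (x::'a::complex_normed_algebra_1) = x"
  by (simp add: scaleC_one)

lemma sC_power1: "scaleC (c^n) (1::'a::complex_normed_algebra_1) = (scaleC c 1)^n"
  by (induction n) (simp_all add: sC_mult1)

lemma sC_sum1: "scaleC (\<Sum>i\<in>A. f i) (1::'a::complex_normed_algebra_1) = (\<Sum>i\<in>A. scaleC (f i) 1)"
  by (induction A rule: infinite_finite_induct) (simp_all add: sC_add1)

lemma sC_of_nat1: "scaleC (of_nat n) (1::'a::complex_normed_algebra_1) = of_nat n"
proof -
  have "scaleC (of_nat n) (1::'a) = scaleC (complex_of_real (real n)) 1" by simp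
  also have "\<dots> = scaleR (real n) 1" by (rule scaleC_of_real)
  also have "\<dots> = of_nat n" by (metis of_real_def of_real_of_nat_eq)
  finally show ?thesis .
qed

lemma norm_sC1: "norm (scaleC c (1::'a::complex_normed_algebra_1)) = cmod c"
  by (simp add: norm_scaleC)

lemma sC_add_right': "scaleC c (x - y) = scaleC c x - scaleC c (y::'a::complex_normed_algebra_1)"
  by (metis sC_1 right_diff_distrib)

lemma neumann:
  fixes z :: "'a::{real_normed_algebra_1,banach}"
  assumes "norm (1 - z) < 1"
  shows "\<exists>w. z * w = 1 \<and> w * z = 1"
proof -
  define u where "u = 1 - z"
  have nu: "norm u < 1" using assms u_def by simp
  have sn: "summable (\<lambda>n. norm u ^ n)" using nu by (simp add: summable_geometric)
  have s: "summable (\<lambda>n. u ^ n)"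
    by (rule summable_comparison_test[OF _ sn]) (auto intro: norm_power_ineq)
  define w where "w = suminf (\<lambda>n. u ^ n)"
  have ws: "(\<lambda>n. u^n) sums w" using s w_def by (simp add: summable_sums)
  have lim0: "(\<lambda>n. u ^ n) \<longlonglongrightarrow> 0"
    using s summable_LIMSEQ_zero by blast
  have tel: "(\<lambda>n. u^n - u^Suc n) sums 1"
    using telescope_sums'[OF lim0] by simp
  have "(\<lambda>n. z * u^n) sums (z * w)" using ws by (rule sums_mult)
  moreover have "z * u^n = u^n - u^Suc n" for n by (simp add: u_def algebra_simps)
  ultimately have "(\<lambda>n. u^n - u^Suc n) sums (z*w)" by simp
  hence zw: "z * w = 1" using tel sums_unique2 by fastforce
  have "(\<lambda>n. u^n * z) sums (w * z)" using ws by (rule sums_mult2)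
  moreover have "u^n * z = u^n - u^Suc n" for n by (simp add: u_def algebra_simps power_commutes[symmetric])
  ultimately have "(\<lambda>n. u^n - u^Suc n) sums (w*z)" by simp
  hence "w * z = 1" using tel sums_unique2 by fastforce
  with zw show ?thesis by blast
qed

definition bideal :: "'a::comm_ring_1 set \<Rightarrow> bool" where
  "bideal I \<longleftrightarrow> 0 \<in> I \<and> (\<forall>x\<in>I. \<forall>y\<in>I. x + y \<in> I) \<and> (\<forall>x\<in>I. \<forall>y. y * x \<in> I)"

lemma bideal_0: "bideal I \<Longrightarrow> 0 \<in> I" by (simp add: bideal_def)
lemma bideal_add: "bideal I \<Longrightarrow> x \<in> I \<Longrightarrow> y \<in> I \<Longrightarrow> x + y \<in> I" by (simp add: bideal_def)
lemma bideal_multL: "bideal I \<Longrightarrow> x \<in> I \<Longrightarrow> y * x \<in> I" by (simp add: bideal_def)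
lemma bideal_multR: "bideal I \<Longrightarrow> x \<in> I \<Longrightarrow> x * y \<in> I" by (metis bideal_multL mult.commute)
lemma bideal_uminus: "bideal I \<Longrightarrow> x \<in> I \<Longrightarrow> - x \<in> I"
  using bideal_multL[of I x "-1"] by simp
lemma bideal_diff: "bideal I \<Longrightarrow> x \<in> I \<Longrightarrow> y \<in> I \<Longrightarrow> x - y \<in> I"
  using bideal_add bideal_uminus by (metis diff_conv_add_uminus)
lemma bideal_sum: "bideal I \<Longrightarrow> (\<And>i. i \<in> A \<Longrightarrow> f i \<in> I) \<Longrightarrow> sum f A \<in> I"
  by (induction A rule: infinite_finite_induct) (auto simp: bideal_0 bideal_add)
lemma bideal_scaleC: "bideal I \<Longrightarrow> (x::'a::{complex_normed_algebra_1,comm_ring_1}) \<in> I \<Longrightarrow> scaleC c x \<in> I"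
  by (metis bideal_multL sC_1)


locale maxideal =
  fixes M :: "'a::{complex_normed_algebra_1,banach,comm_ring_1} set"
  assumes bid: "bideal M" and proper: "1 \<notin> M"
    and maxl: "\<And>J. bideal J \<Longrightarrow> M \<subseteq> J \<Longrightarrow> 1 \<notin> J \<Longrightarrow> J = M"
begin

definition q :: "'a \<Rightarrow> real" where "q z = Inf ((\<lambda>m. norm (z - m)) ` M)"

lemma M0: "0 \<in> M" using bid bideal_0 by blast

lemma bdd: "bdd_below ((\<lambda>m. norm (z - m)) ` M)"
  by (rule bdd_belowI[of _ 0]) auto

lemma q_le: "m \<in> M \<Longrightarrow> q z \<le> norm (z - m)"
  unfolding q_def by (rule cInf_lower) (use bdd in auto)

lemma q_ge: "(\<And>m. m \<in> M \<Longrightarrow> c \<le> norm (z - m)) \<Longrightarrow> c \<le> q z"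
  unfolding q_def by (rule cInf_greatest) (use M0 in auto)

lemma q_nonneg: "0 \<le> q z" by (rule q_ge) auto

lemma q_less: "q z < c \<Longrightarrow> \<exists>m\<in>M. norm (z - m) < c"
  unfolding q_def using cInf_lessD[of "(\<lambda>m. norm (z - m)) ` M" c] M0 by auto

lemma q_zero: "m \<in> M \<Longrightarrow> q m = 0"
  using q_le[of m m] q_nonneg[of m] by simp

lemma q_le_norm: "q z \<le> norm z" using q_le[OF M0] by simp

lemma q_add: "q (z + w) \<le> q z + q w"
proof -
  have 1: "q (z + w) \<le> norm (z - m) + norm (w - m')" if "m \<in> M" "m' \<in> M" for m m'
  proof -
    have "q (z + w) \<le> norm (z + w - (m + m'))" by (rule q_le) (use that bid bideal_add in auto)
    also have "\<dots> \<le> norm (z - m) + norm (w - m')"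
      by (metis add_diff_add norm_triangle_ineq)
    finally show ?thesis .
  qed
  have "q (z + w) - norm (w - m') \<le> q z" if "m' \<in> M" for m'
    by (rule q_ge) (use 1 that in force)
  hence "q (z + w) - q z \<le> q w" by (intro q_ge) force
  thus ?thesis by simp
qed

lemma q_mult: "q (z * w) \<le> q z * q w"
proof -
  have 1: "q (z * w) \<le> norm (z - m) * norm (w - m')" if "m \<in> M" "m' \<in> M" for m m'
  proof -
    have "z * m' + m * w - m * m' \<in> M"
      using that bid by (meson bideal_diff bideal_add bideal_multL bideal_multR)
    hence "q (z * w) \<le> norm (z * w - (z * m' + m * w - m * m'))" by (rule q_le)
    also have "z * w - (z * m' + m * w - m * m') = (z - m) * (w - m')" by (simp add: algebra_simps)
    also have "norm \<dots> \<le> norm (z - m) * norm (w - m')" by (rule norm_mult_ineq)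
    finally show ?thesis .
  qed
  have 2: "q (z * w) \<le> q z * norm (w - m')" if "m' \<in> M" for m'
  proof (cases "norm (w - m') = 0")
    case True
    then show ?thesis using 1[OF M0 that] by simp
  next
    case False
    hence pos: "norm (w - m') > 0" by simp
    have "q (z * w) / norm (w - m') \<le> q z"
      by (rule q_ge) (use 1 that pos in \<open>auto simp: divide_le_eq\<close>)
    thus ?thesis using pos by (simp add: divide_le_eq mult.commute)
  qed
  show ?thesis
  proof (cases "q z = 0")
    case True
    then show ?thesis using 2[OF M0] q_nonneg[of "z*w"] by simp
  next
    case False
    hence pos: "q z > 0" using q_nonneg[of z] by simp
    have "q (z * w) / q z \<le> q w"
      by (rule q_ge) (use 2 pos in \<open>auto simp: divide_le_eq mult.commute\<close>)
    thus ?thesis using pos by (simp add: divide_le_eq mult.commute)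
  qed
qed

lemma q_scaleC_le: "q (scaleC c z) \<le> cmod c * q z"
proof (cases "c = 0")
  case True
  then show ?thesis using q_zero[OF M0] by simp
next
  case False
  hence pos: "cmod c > 0" by simp
  have "q (scaleC c z) / cmod c \<le> q z"
  proof (rule q_ge)
    fix m assume m: "m \<in> M"
    have "q (scaleC c z) \<le> norm (scaleC c z - scaleC c m)"
      by (rule q_le) (use m bid bideal_scaleC in auto)
    also have "\<dots> = cmod c * norm (z - m)" by (simp add: sC_add_right'[symmetric] norm_scaleC)
    finally show "q (scaleC c z) / cmod c \<le> norm (z - m)" using pos by (simp add: divide_le_eq mult.commute)
  qed
  thus ?thesis using pos by (simp add: divide_le_eq mult.commute)
qed

lemma q_scaleC: "q (scaleC c z) = cmod c * q z"
proof (cases "c = 0")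
  case True
  then show ?thesis using q_zero[OF M0] by simp
next
  case False
  have "q z = q (scaleC (inverse c) (scaleC c z))" by (simp add: scaleC_scaleC False)
  also have "\<dots> \<le> cmod (inverse c) * q (scaleC c z)" by (rule q_scaleC_le)
  also have "\<dots> = q (scaleC c z) / cmod c" by (simp add: norm_inverse divide_inverse mult.commute)
  finally have "cmod c * q z \<le> q (scaleC c z)" using False
    by (simp add: pos_le_divide_eq mult.commute)
  with q_scaleC_le[of c z] show ?thesis by simp
qed

lemma q_uminus: "q (- z) = q z"
proof -
  have "- z = scaleC (-1) z" by (metis sC_1 sC_uminus1 sC_one1 mult_minus_left)
  thus ?thesis using q_scaleC[of "-1" z] by simp
qed

lemma q_diff: "q (z - w) \<le> q z + q w"
  using q_add[of z "-w"] q_uminus[of w] by simp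

lemma q_cong: "z - w \<in> M \<Longrightarrow> q z = q w"
proof -
  assume a: "z - w \<in> M"
  have "q z \<le> q w + q (z - w)" using q_add[of w "z - w"] by simp
  moreover have "q w \<le> q z + q (w - z)" using q_add[of z "w - z"] by simp
  moreover have "w - z \<in> M" using a bid bideal_uminus by fastforce
  ultimately show ?thesis using q_zero a by fastforce
qed

lemma q_sum: "q (sum f A) \<le> (\<Sum>i\<in>A. q (f i))"
  by (induction A rule: infinite_finite_induct) (auto simp: q_zero[OF M0] intro: order.trans[OF q_add])

lemma q_one: "1 \<le> q 1"
proof (rule ccontr)
  assume "\<not> 1 \<le> q 1"
  then obtain m where m: "m \<in> M" "norm (1 - m) < 1" using q_less by force
  then obtain w where "m * w = 1" using neumann by blast
  hence "1 \<in> M" using m bid bideal_multR by metis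
  thus False using proper by simp
qed

lemma q_pow: "q (z ^ n) \<le> q z ^ n"
proof (induction n)
  case 0 show ?case using q_le_norm[of 1] by simp
next
  case (Suc n)
  have "q (z ^ Suc n) \<le> q z * q (z ^ n)" using q_mult by simp
  also have "\<dots> \<le> q z * q z ^ n" using Suc q_nonneg by (simp add: mult_left_mono)
  finally show ?case by simp
qed

end


lemma roots_sum:
  assumes n: "n > 0" and j: "j < n"
  shows "(\<Sum>k<n. (cis (2*pi/n) ^ k) ^ j) = (if j = 0 then of_nat n else 0)"
proof (cases "j = 0")
  case True then show ?thesis by simp
next
  case False
  define w where "w = cis (2*pi/n) ^ j"
  have wj: "w = cis (2 * pi * real j / real n)"
  proof -
    have "w = cis (real j * (2*pi/n))" unfolding w_def by (rule Complex.DeMoivre)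
    also have "real j * (2*pi/n) = 2 * pi * real j / real n" by simp
    finally show ?thesis .
  qed
  have "w \<noteq> 1"
  proof
    assume "w = 1"
    hence "cis (2 * pi * real j / real n) = cis (2 * pi * real 0 / real n)" using wj by simp
    moreover have "inj_on (\<lambda>k. cis (2 * pi * real k / real n)) {..<n}"
      using Complex.bij_betw_roots_unity[OF n] bij_betw_def by blast
    ultimately have "j = 0" using j n unfolding inj_on_def by blast
    thus False using False by simp
  qed
  have wn: "w ^ n = 1"
  proof -
    have "w ^ n = (cis (2*pi/n) ^ n) ^ j" unfolding w_def by (simp add: power_mult[symmetric] mult.commute)
    also have "cis (2*pi/n) ^ n = cis (real n * (2*pi/n))" by (rule Complex.DeMoivre)
    also have "\<dots> = 1" using n by simp
    finally show ?thesis by simp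
  qed
  have "(\<Sum>k<n. (cis (2*pi/n) ^ k) ^ j) = (\<Sum>k<n. w ^ k)"
    unfolding w_def by (simp add: power_mult[symmetric] mult.commute)
  also have "\<dots> = (w ^ n - 1) / (w - 1)" using \<open>w \<noteq> 1\<close> by (rule geometric_sum)
  also have "\<dots> = 0" using wn by simp
  finally show ?thesis using False by simp
qed

lemma roots_pow_n:
  assumes n: "n > 0"
  shows "(cis (2*pi/n) ^ k) ^ n = 1"
proof -
  have "(cis (2*pi/n) ^ k) ^ n = (cis (2*pi/n) ^ n) ^ k" by (simp add: power_mult[symmetric] mult.commute)
  also have "cis (2*pi/n) ^ n = cis (real n * (2*pi/n))" by (rule Complex.DeMoivre)
  also have "\<dots> = 1" using n by simp
  finally show ?thesis by simp
qed

lemma geom_identity: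
  fixes E y s u0 :: "'a::comm_ring_1"
  assumes "E * y = 1 + u0"
  shows "(E - s) * (\<Sum>j<n. s^j * y^(j+1)) = 1 - s^n * y^n + u0 * (\<Sum>j<n. s^j * y^j)"
proof (induction n)
  case 0 then show ?case by simp
next
  case (Suc n)
  have "(E - s) * (\<Sum>j<Suc n. s^j * y^(j+1)) = (E - s) * (\<Sum>j<n. s^j * y^(j+1)) + (E - s) * (s^n * y^(n+1))"
    by (simp add: algebra_simps)
  also have "(E - s) * (s^n * y^(n+1)) = s^n * y^n * (E * y) - s^(Suc n) * y^(Suc n)"
    by (simp add: algebra_simps)
  also have "\<dots> = s^n * y^n * (1 + u0) - s^(Suc n) * y^(Suc n)" using assms by simp
  finally show ?case using Suc by (simp add: algebra_simps)
qed

context maxideal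
begin

lemma inv_mod:
  assumes "z \<notin> M" shows "\<exists>y. z * y - 1 \<in> M"
proof -
  define J where "J = {m + z * y | m y. m \<in> M}"
  have "bideal J" unfolding bideal_def J_def
  proof (intro conjI ballI allI)
    show "0 \<in> {m + z * y |m y. m \<in> M}"
      by (rule CollectI, rule exI[of _ 0], rule exI[of _ 0]) (simp add: M0)
  next
    fix a b assume "a \<in> {m + z * y |m y. m \<in> M}" "b \<in> {m + z * y |m y. m \<in> M}"
    then obtain m y m' y' where "a = m + z * y" "b = m' + z * y'" "m \<in> M" "m' \<in> M" by blast
    moreover have "m + m' \<in> M" using \<open>m \<in> M\<close> \<open>m' \<in> M\<close> bid bideal_add by blast
    moreover have "a + b = (m + m') + z * (y + y')" using \<open>a = m + z * y\<close> \<open>b = m' + z * y'\<close> by (simp add: algebra_simps)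
    ultimately show "a + b \<in> {m + z * y |m y. m \<in> M}" by blast
  next
    fix a t assume "a \<in> {m + z * y |m y. m \<in> M}"
    then obtain m y where "a = m + z * y" "m \<in> M" by blast
    moreover have "t * m \<in> M" using \<open>m \<in> M\<close> bid bideal_multL by blast
    moreover have "t * a = t * m + z * (t * y)" using \<open>a = m + z * y\<close> by (simp add: algebra_simps)
    ultimately show "t * a \<in> {m + z * y |m y. m \<in> M}" by blast
  qed
  moreover have "M \<subseteq> J" unfolding J_def by (force intro: exI[of _ 0])
  moreover have "z \<in> J" unfolding J_def using M0 by (force intro: exI[of _ 1])
  ultimately have "1 \<in> J" using maxl assms by blast
  then obtain m y where "1 = m + z * y" "m \<in> M" unfolding J_def by blast
  hence "z * y - 1 = - m" by (simp add: algebra_simps)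
  thus ?thesis using \<open>m \<in> M\<close> bid bideal_uminus by metis
qed

lemma inv_unique:
  assumes "z * y - 1 \<in> M" "z * y' - 1 \<in> M" shows "y - y' \<in> M"
proof -
  have "y - y' = y' * (z * y - 1) - y * (z * y' - 1)" by (simp add: algebra_simps)
  thus ?thesis using assms bid by (metis bideal_diff bideal_multL)
qed

lemma M_scaleC: "scaleC c z = scaleC c 1 * z" by (rule sC_1)

end


context maxideal
begin

context
  fixes x :: 'a
  assumes nx: "\<And>l. x - scaleC l 1 \<notin> M"
begin

definition R :: "complex \<Rightarrow> 'a" where "R l = (SOME y. (x - scaleC l 1) * y - 1 \<in> M)"

lemma RR: "(x - scaleC l 1) * R l - 1 \<in> M"
  unfolding R_def using inv_mod[OF nx] by (rule someI_ex)

definition g :: "complex \<Rightarrow> real" where "g l = q (R l)"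

lemma g_nonneg: "0 \<le> g l" unfolding g_def by (rule q_nonneg)

lemma g_pos: "g l > 0"
proof -
  have eq: "q ((x - scaleC l 1) * R l) = q 1" by (rule q_cong) (rule RR)
  have "1 \<le> q ((x - scaleC l 1) * R l)" using q_one eq by simp
  also have "\<dots> \<le> q (x - scaleC l 1) * g l" unfolding g_def by (rule q_mult)
  finally have "1 \<le> q (x - scaleC l 1) * g l" .
  thus ?thesis using g_nonneg[of l] by (cases "g l = 0") auto
qed

lemma res: "R l - (R m + scaleC (l - m) (R l * R m)) \<in> M"
proof -
  have "R l - (R m + scaleC (l - m) (R l * R m)) =
        R m * ((x - scaleC l 1) * R l - 1) - R l * ((x - scaleC m 1) * R m - 1)"
    by (subst sC_1) (simp add: sC_diff1 algebra_simps)
  thus ?thesis using RR bid by (metis bideal_diff bideal_multL)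
qed

lemma g_lip: "g l \<le> g m + cmod (l - m) * g l * g m"
proof -
  have "g l = q (R m + scaleC (l - m) (R l * R m))" unfolding g_def by (rule q_cong) (rule res)
  also have "\<dots> \<le> g m + q (scaleC (l - m) (R l * R m))" unfolding g_def by (rule q_add)
  also have "q (scaleC (l - m) (R l * R m)) = cmod (l - m) * q (R l * R m)" by (rule q_scaleC)
  also have "\<dots> \<le> cmod (l - m) * (g l * g m)" unfolding g_def by (intro mult_left_mono q_mult) auto
  finally show ?thesis by (simp add: mult.assoc)
qed

lemma g_cont: "isCont g l"
  unfolding isCont_def LIM_eq
proof (intro allI impI)
  fix r :: real assume r: "r > 0"
  define G where "G = g l"
  have G: "G > 0" using g_pos G_def by simp
  define s where "s = min (1 / (2 * G)) (r / (2 * G * G + 1))"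
  have GG: "2 * G * G + 1 > 0" using G by (simp add: add_pos_nonneg)
  have s: "s > 0" using G r GG by (simp add: s_def)
  show "\<exists>s>0. \<forall>xa. xa \<noteq> l \<and> norm (xa - l) < s \<longrightarrow> norm (g xa - g l) < r"
  proof (intro exI[of _ s] conjI allI impI s)
    fix mu assume "mu \<noteq> l \<and> norm (mu - l) < s"
    hence d: "cmod (mu - l) < s" by simp
    define d where "d = cmod (mu - l)"
    have d0: "d \<ge> 0" by (simp add: d_def)
    have dl: "cmod (l - mu) = d" by (simp add: d_def norm_minus_commute)
    have ds1: "d * G \<le> 1/2" using d G unfolding d_def s_def by (simp add: field_simps)
    have "d < r / (2 * G * G + 1)" using d unfolding d_def s_def by simp
    hence ds2: "d * (2 * G * G + 1) < r" using GG by (simp add: pos_less_divide_eq)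
    have h1: "g mu \<le> G + d * g mu * G" using g_lip[of mu l] unfolding G_def d_def by simp
    have h2: "G \<le> g mu + d * G * g mu" using g_lip[of l mu] dl unfolding G_def by simp
    have "d * g mu * G \<le> g mu / 2"
    proof -
      have "d * g mu * G = (d * G) * g mu" by simp
      also have "\<dots> \<le> (1/2) * g mu" by (rule mult_right_mono[OF ds1 g_nonneg])
      finally show ?thesis by simp
    qed
    hence gm: "g mu \<le> 2 * G" using h1 by simp
    have "d * G * g mu \<le> d * G * (2 * G)" using gm d0 G by (simp add: mult_left_mono)
    hence e: "d * G * g mu \<le> d * (2 * G * G)" by (simp add: algebra_simps)
    have "d * (2 * G * G) \<le> d * (2 * G * G + 1)" using d0 by (simp add: mult_left_mono)
    hence bnd: "d * G * g mu < r" using e ds2 by linarith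
    have "\<bar>g mu - G\<bar> \<le> d * G * g mu" using h1 h2 by (simp add: abs_le_iff mult_ac)
    thus "norm (g mu - g l) < r" using bnd unfolding G_def by simp
  qed
qed

lemma g_decay: "(cmod l - q x) * g l \<le> 1"
proof -
  have e: "scaleC l (R l) = x * R l - (x - scaleC l 1) * R l"
    by (subst sC_1) (simp add: algebra_simps)
  have "cmod l * g l = q (scaleC l (R l))" unfolding g_def by (simp add: q_scaleC)
  also have "\<dots> \<le> q (x * R l) + q ((x - scaleC l 1) * R l)" unfolding e by (rule q_diff)
  also have "q ((x - scaleC l 1) * R l) = q 1" by (rule q_cong) (rule RR)
  also have "q 1 \<le> 1" using q_le_norm[of 1] by simp
  also have "q (x * R l) \<le> q x * g l" unfolding g_def by (rule q_mult)
  finally show ?thesis by (simp add: algebra_simps)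
qed

lemma g_max: "\<exists>l0. \<forall>l. g l \<le> g l0"
proof -
  define G0 where "G0 = g 0"
  have G0: "G0 > 0" using g_pos G0_def by simp
  define Rad where "Rad = q x + 1 / G0 + 1"
  have cont: "continuous_on (cball 0 Rad) g"
    by (rule continuous_at_imp_continuous_on) (use g_cont in blast)
  have "1 / G0 > 0" using G0 by simp
  hence Rad0: "Rad \<ge> 0" using q_nonneg[of x] unfolding Rad_def by linarith
  have ne: "cball 0 Rad \<noteq> {}" using Rad0 by simp
  obtain l0 where l0: "l0 \<in> cball 0 Rad" "\<And>l. l \<in> cball 0 Rad \<Longrightarrow> g l \<le> g l0"
    using continuous_attains_sup[OF compact_cball ne cont] by blast
  have "0 \<in> cball 0 Rad" using Rad0 by simp
  hence G0l0: "G0 \<le> g l0" using l0 G0_def by simp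
  have "g l \<le> g l0" for l
  proof (cases "l \<in> cball 0 Rad")
    case True then show ?thesis using l0 by simp
  next
    case False
    hence "cmod l > Rad" by simp
    hence big: "cmod l - q x > 1 / G0" unfolding Rad_def by simp
    have "g l * (1 / G0) < g l * (cmod l - q x)" by (rule mult_strict_left_mono[OF big g_pos])
    also have "\<dots> \<le> 1" using g_decay[of l] by (simp add: mult.commute)
    finally have "g l / G0 < 1" by simp
    hence "g l < G0" using G0 by (simp add: divide_less_eq)
    thus ?thesis using G0l0 by simp
  qed
  thus ?thesis by blast
qed


lemma sC_sum_left: "scaleC (\<Sum>i\<in>A. f i) w = (\<Sum>i\<in>A. scaleC (f i) w)"
  by (subst sC_1) (simp add: sC_sum1 sum_distrib_right sC_1[symmetric])

lemma stepA:
  "R (l0 + c) - ((\<Sum>j<n. scaleC (c^j) (R l0 ^ (j+1))) + scaleC (c^n) (R l0 ^ n * R (l0 + c))) \<in> M"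
proof -
  define y where "y = R l0"
  define s where "s = scaleC c (1::'a)"
  define E where "E = x - scaleC l0 1"
  define u0 where "u0 = E * y - 1"
  have u0M: "u0 \<in> M" using RR[of l0] unfolding u0_def E_def y_def .
  define R' where "R' = R (l0 + c)"
  define ul where "ul = (E - s) * R' - 1"
  have Es: "x - scaleC (l0 + c) 1 = E - s" unfolding E_def s_def by (simp add: sC_add1)
  have ulM: "ul \<in> M" using RR[of "l0 + c"] unfolding ul_def R'_def Es .
  have geo: "(E - s) * (\<Sum>j<n. s^j * y^(j+1)) = 1 - s^n * y^n + u0 * (\<Sum>j<n. s^j * y^j)"
    by (rule geom_identity) (simp add: u0_def)
  define T where "T = (\<Sum>j<n. s^j * y^(j+1)) + s^n * (y^n * R')"
  have "(E - s) * T - 1 = (E - s) * (\<Sum>j<n. s^j * y^(j+1)) + s^n * y^n * ((E - s) * R') - 1"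
    unfolding T_def by (simp add: algebra_simps)
  also have "(E - s) * R' = ul + 1" unfolding ul_def by simp
  also note geo
  finally have "(E - s) * T - 1 = u0 * (\<Sum>j<n. s^j * y^j) + s^n * y^n * ul"
    by (simp add: algebra_simps)
  hence TM: "(E - s) * T - 1 \<in> M" using u0M ulM bid by (metis bideal_add bideal_multL bideal_multR)
  have "R' - T \<in> M" by (rule inv_unique[OF _ TM]) (use ulM ul_def in simp)
  moreover have "T = (\<Sum>j<n. scaleC (c^j) (R l0 ^ (j+1))) + scaleC (c^n) (R l0 ^ n * R (l0 + c))"
    unfolding T_def s_def y_def R'_def
    by (subst (1 2) sC_1) (simp add: sC_power1)
  ultimately show ?thesis unfolding R'_def by simp
qed

lemma stepB:
  fixes l0 c0 :: complex and n :: nat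
  assumes n: "n > 0"
  defines "SR \<equiv> (\<Sum>k<n. R (l0 + cis (2*pi/n) ^ k * c0))"
  shows "SR - of_nat n * R l0 - scaleC (c0^n) (R l0 ^ n * SR) \<in> M"
proof -
  define w where "w = cis (2*pi/n)"
  define y where "y = R l0"
  define ck where "ck k = w ^ k * c0" for k
  have "(\<Sum>k<n. R (l0 + ck k) - ((\<Sum>j<n. scaleC (ck k^j) (y ^ (j+1))) + scaleC (ck k^n) (y ^ n * R (l0 + ck k)))) \<in> M"
    unfolding y_def by (rule bideal_sum[OF bid]) (rule stepA)
  also have "(\<Sum>k<n. R (l0 + ck k) - ((\<Sum>j<n. scaleC (ck k^j) (y ^ (j+1))) + scaleC (ck k^n) (y ^ n * R (l0 + ck k))))
     = SR - (\<Sum>k<n. \<Sum>j<n. scaleC (ck k^j) (y ^ (j+1))) - (\<Sum>k<n. scaleC (ck k^n) (y ^ n * R (l0 + ck k)))"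
    unfolding SR_def ck_def w_def by (simp add: sum_subtractf sum.distrib algebra_simps)
  also have "(\<Sum>k<n. \<Sum>j<n. scaleC (ck k^j) (y ^ (j+1))) = of_nat n * y"
  proof -
    have "(\<Sum>k<n. \<Sum>j<n. scaleC (ck k^j) (y ^ (j+1))) = (\<Sum>j<n. \<Sum>k<n. scaleC (ck k^j) (y ^ (j+1)))"
      by (rule sum.swap)
    also have "\<dots> = (\<Sum>j<n. scaleC (\<Sum>k<n. ck k^j) (y ^ (j+1)))" by (simp add: sC_sum_left)
    also have "\<dots> = (\<Sum>j<n. if j = 0 then scaleC (of_nat n) y else 0)"
    proof (rule sum.cong[OF refl])
      fix j assume j: "j \<in> {..<n}"
      have "(\<Sum>k<n. ck k^j) = c0^j * (\<Sum>k<n. (w^k)^j)"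
        unfolding ck_def by (simp add: power_mult_distrib sum_distrib_left mult.commute)
      also have "\<dots> = c0^j * (if j = 0 then of_nat n else 0)"
        unfolding w_def using roots_sum[OF n, of j] j by simp
      finally show "scaleC (\<Sum>k<n. ck k^j) (y ^ (j+1)) = (if j = 0 then scaleC (of_nat n) y else 0)"
        by simp
    qed
    also have "\<dots> = scaleC (of_nat n) y" using n by (simp add: sum.delta)
    also have "\<dots> = of_nat n * y" by (subst sC_1) (simp add: sC_of_nat1)
    finally show ?thesis .
  qed
  also have "(\<Sum>k<n. scaleC (ck k^n) (y ^ n * R (l0 + ck k))) = scaleC (c0^n) (y^n * SR)"
  proof -
    have "ck k ^ n = c0 ^ n" for k
      unfolding ck_def w_def using roots_pow_n[OF n, of k] by (simp add: power_mult_distrib)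
    hence "(\<Sum>k<n. scaleC (ck k^n) (y ^ n * R (l0 + ck k))) = (\<Sum>k<n. scaleC (c0^n) 1 * (y ^ n * R (l0 + ck k)))"
      by (simp add: sC_1[of _ "y ^ n * _"])
    also have "\<dots> = scaleC (c0^n) 1 * (y^n * SR)"
      unfolding SR_def ck_def w_def by (simp add: sum_distrib_left)
    also have "\<dots> = scaleC (c0^n) (y^n * SR)" by (simp add: sC_1[symmetric])
    finally show ?thesis .
  qed
  finally show ?thesis unfolding y_def .
qed


lemma g_disc:
  assumes mx: "\<And>l. g l \<le> g l0" and small: "cmod (mu - l0) * g l0 < 1"
  shows "g mu = g l0"
proof -
  define m where "m = g l0"
  define c0 where "c0 = mu - l0"
  define t where "t = cmod c0 * m"
  have m0: "m > 0" unfolding m_def by (rule g_pos)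
  have t0: "0 \<le> t" unfolding t_def using m0 by simp
  have t1: "t < 1" unfolding t_def c0_def m_def using small .
  have gmu: "g mu \<le> m" unfolding m_def by (rule mx)
  have key: "m - g mu \<le> of_nat n * t^n * m" if n: "n > 0" for n :: nat
  proof -
    define SR where "SR = (\<Sum>k<n. R (l0 + cis (2*pi/n) ^ k * c0))"
    have B: "SR - of_nat n * R l0 - scaleC (c0^n) (R l0 ^ n * SR) \<in> M"
      using stepB[OF n, of l0 c0] unfolding SR_def .
    have qn: "q (of_nat n * R l0) = of_nat n * m"
    proof -
      have "of_nat n * R l0 = scaleC (of_nat n) (R l0)" by (metis sC_1 sC_of_nat1)
      thus ?thesis by (simp add: q_scaleC m_def g_def)
    qed
    have "q (of_nat n * R l0) = q (SR - scaleC (c0^n) (R l0 ^ n * SR))"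
    proof (rule q_cong)
      have "of_nat n * R l0 - (SR - scaleC (c0^n) (R l0 ^ n * SR)) = - (SR - of_nat n * R l0 - scaleC (c0^n) (R l0 ^ n * SR))"
        by (simp add: algebra_simps)
      thus "of_nat n * R l0 - (SR - scaleC (c0^n) (R l0 ^ n * SR)) \<in> M" using B bid bideal_uminus by metis
    qed
    also have "\<dots> \<le> q SR + q (scaleC (c0^n) (R l0 ^ n * SR))" by (rule q_diff)
    also have "q (scaleC (c0^n) (R l0 ^ n * SR)) = cmod c0 ^ n * q (R l0 ^ n * SR)"
      by (simp add: q_scaleC norm_power)
    also have "q (R l0 ^ n * SR) \<le> m ^ n * q SR"
    proof -
      have "q (R l0 ^ n * SR) \<le> q (R l0 ^ n) * q SR" by (rule q_mult)
      also have "\<dots> \<le> m ^ n * q SR" using q_pow[of "R l0" n] q_nonneg[of SR]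
        unfolding m_def g_def by (simp add: mult_right_mono)
      finally show ?thesis .
    qed
    hence "cmod c0 ^ n * q (R l0 ^ n * SR) \<le> cmod c0 ^ n * (m ^ n * q SR)" by (simp add: mult_left_mono)
    finally have A: "of_nat n * m \<le> (1 + t^n) * q SR" using qn unfolding t_def
      by (simp add: power_mult_distrib algebra_simps)
    have "q SR \<le> (\<Sum>k<n. g (l0 + cis (2*pi/n) ^ k * c0))" unfolding SR_def g_def by (rule q_sum)
    also have "\<dots> \<le> g mu + (of_nat n - 1) * m"
    proof -
      obtain n' where n': "n = Suc n'" using n by (cases n) auto
      have "(\<Sum>k<n. g (l0 + cis (2*pi/n) ^ k * c0)) = g (l0 + c0) + (\<Sum>k<n'. g (l0 + cis (2*pi/n) ^ Suc k * c0))"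
        unfolding n' by (subst sum.lessThan_Suc_shift) simp
      also have "(\<Sum>k<n'. g (l0 + cis (2*pi/n) ^ Suc k * c0)) \<le> of_nat (card {..<n'}) * m"
        by (rule sum_bounded_above) (simp add: m_def mx)
      finally show ?thesis unfolding n' c0_def by simp
    qed
    finally have Q: "q SR \<le> g mu + (of_nat n - 1) * m" .
    have tn: "0 \<le> t^n" using t0 by simp
    have "of_nat n * m \<le> (1 + t^n) * (g mu + (of_nat n - 1) * m)"
      using A Q tn q_nonneg[of SR] by (meson add_nonneg_nonneg mult_left_mono order.trans zero_le_one)
    also have "\<dots> = g mu + (of_nat n - 1) * m + t^n * (g mu + (of_nat n - 1) * m)" by (simp add: algebra_simps)
    also have "t^n * (g mu + (of_nat n - 1) * m) \<le> t^n * (of_nat n * m)"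
      using gmu tn by (intro mult_left_mono) (auto simp: algebra_simps)
    finally show ?thesis by (simp add: algebra_simps)
  qed
  have "(\<lambda>n. of_nat n * t^n) \<longlonglongrightarrow> 0" using powser_times_n_limit_0[of t] t0 t1 by simp
  hence lim: "(\<lambda>n. of_nat n * t^n * m) \<longlonglongrightarrow> 0" using tendsto_mult[OF _ tendsto_const, of _ 0 sequentially m] by simp
  have "m - g mu \<le> 0" by (rule LIMSEQ_le_const[OF lim]) (use key in \<open>auto intro!: exI[of _ 1]\<close>)
  with gmu show ?thesis unfolding m_def by simp
qed

lemma g_const:
  assumes mx: "\<And>l. g l \<le> g l0"
  shows "g mu = g l0"
proof -
  define m where "m = g l0"
  have m0: "m > 0" unfolding m_def by (rule g_pos)
  have pr: "g nu = m" if "g p = m" "cmod (nu - p) * m < 1" for p nu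
    using g_disc[of p nu] mx that unfolding m_def by simp
  obtain N :: nat where N: "cmod (mu - l0) * m < of_nat N" using reals_Archimedean2 by blast
  have "0 \<le> cmod (mu - l0) * m" using m0 by simp
  hence "real N > 0" using N by linarith
  hence N0: "N > 0" by simp
  define d where "d = (mu - l0) / of_nat N"
  define p where "p j = l0 + of_nat j * d" for j :: nat
  have "g (p j) = m" for j
  proof (induction j)
    case 0 then show ?case by (simp add: p_def m_def)
  next
    case (Suc j)
    have "p (Suc j) - p j = d"
      unfolding p_def by (simp add: algebra_simps)
    hence "cmod (p (Suc j) - p j) * m = cmod (mu - l0) * m / of_nat N"
      unfolding d_def by (simp add: norm_divide)
    also have "\<dots> < 1" using N N0 by (simp add: divide_less_eq)
    finally show ?case using pr[OF Suc.IH] by simp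
  qed
  moreover have "p N = mu" using N0 unfolding p_def d_def by simp
  ultimately show ?thesis unfolding m_def by metis
qed

lemma GM_contra: False
proof -
  obtain l0 where mx: "\<And>l. g l \<le> g l0" using g_max by blast
  define m where "m = g l0"
  have m0: "m > 0" unfolding m_def by (rule g_pos)
  define l where "l = complex_of_real (q x + 1 / m + 1)"
  have "cmod l = \<bar>q x + 1 / m + 1\<bar>" unfolding l_def by (rule norm_of_real)
  also have "\<dots> = q x + 1 / m + 1" using q_nonneg[of x] m0 by simp
  finally have "cmod l = q x + 1 / m + 1" .
  moreover have "g l = m" unfolding m_def by (rule g_const[OF mx])
  ultimately have "(1 / m + 1) * m \<le> 1" using g_decay[of l] by simp
  thus False using m0 by (simp add: algebra_simps)
qed

end

lemma GM: "\<exists>l. x - scaleC l 1 \<in> M"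
  using GM_contra by blast

end


context maxideal
begin

definition chr :: "'a \<Rightarrow> complex" where "chr z = (THE l. z - scaleC l 1 \<in> M)"

lemma chr_unique:
  assumes "z - scaleC l 1 \<in> M" "z - scaleC l' 1 \<in> M" shows "l = l'"
proof (rule ccontr)
  assume ne: "l \<noteq> l'"
  have "(z - scaleC l' 1) - (z - scaleC l 1) \<in> M" using assms bid bideal_diff by blast
  hence "scaleC (l - l') 1 \<in> M" by (simp add: sC_diff1)
  hence "scaleC (inverse (l - l')) (scaleC (l - l') 1) \<in> M" using bid bideal_scaleC by blast
  hence "(1::'a) \<in> M" using ne by (simp add: scaleC_scaleC)
  thus False using proper by simp
qed

lemma chr_mem: "z - scaleC (chr z) 1 \<in> M"
proof -
  obtain l where l: "z - scaleC l 1 \<in> M" using GM by blast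
  have "\<exists>!l. z - scaleC l 1 \<in> M" using l chr_unique by blast
  from theI'[OF this] show ?thesis unfolding chr_def .
qed

lemma chr_eqI: "z - scaleC l 1 \<in> M \<Longrightarrow> chr z = l"
  using chr_unique chr_mem by blast

lemma chr_add: "chr (z + w) = chr z + chr w"
proof (rule chr_eqI)
  have "z + w - scaleC (chr z + chr w) 1 = (z - scaleC (chr z) 1) + (w - scaleC (chr w) 1)"
    by (simp add: sC_add1)
  thus "z + w - scaleC (chr z + chr w) 1 \<in> M" using chr_mem bid bideal_add by metis
qed

lemma chr_mult: "chr (z * w) = chr z * chr w"
proof (rule chr_eqI)
  have "z * w - scaleC (chr z * chr w) 1 = z * (w - scaleC (chr w) 1) + scaleC (chr w) 1 * (z - scaleC (chr z) 1)"
    by (simp add: sC_mult1 algebra_simps)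
  thus "z * w - scaleC (chr z * chr w) 1 \<in> M" using chr_mem bid by (metis bideal_add bideal_multL)
qed

lemma chr_scaleC: "chr (scaleC c z) = c * chr z"
proof (rule chr_eqI)
  have "scaleC c z - scaleC (c * chr z) 1 = scaleC c (z - scaleC (chr z) 1)"
    by (simp add: sC_add_right' scaleC_scaleC)
  thus "scaleC c z - scaleC (c * chr z) 1 \<in> M" using chr_mem bid bideal_scaleC by metis
qed

lemma chr_one: "chr 1 = 1"
  by (rule chr_eqI) (simp add: M0)

lemma chr_M: "m \<in> M \<Longrightarrow> chr m = 0"
  by (rule chr_eqI) simp

lemma chr_uminus: "chr (- z) = - chr z"
proof -
  have "- z = scaleC (-1) z" by (metis sC_1 sC_uminus1 sC_one1 mult_minus_left)
  thus ?thesis by (simp add: chr_scaleC)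
qed

lemma chr_diff: "chr (z - w) = chr z - chr w"
  using chr_add[of z "-w"] chr_uminus[of w] by simp

lemma chr_bound: "cmod (chr z) \<le> norm z"
proof (rule ccontr)
  assume "\<not> cmod (chr z) \<le> norm z"
  hence big: "norm z < cmod (chr z)" by simp
  define c where "c = chr z"
  have "cmod c > 0" using big norm_ge_zero[of z] unfolding c_def by linarith
  hence c0: "c \<noteq> 0" by auto
  define u where "u = 1 - scaleC (inverse c) z"
  have "1 - u = scaleC (inverse c) z" unfolding u_def by simp
  hence "norm (1 - u) = cmod (inverse c) * norm z" by (simp add: norm_scaleC)
  also have "\<dots> = norm z / cmod c" by (simp add: norm_inverse divide_inverse)
  also have "\<dots> < 1" using big c0 unfolding c_def by (simp add: divide_less_eq)
  finally obtain v where v: "u * v = 1" using neumann by blast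
  have "chr u = 0" unfolding u_def using c0 by (simp add: chr_diff chr_one chr_scaleC c_def)
  hence "chr (u * v) = 0" by (simp add: chr_mult)
  thus False using v chr_one by simp
qed

end

theorem gelfand_char:
  fixes x :: "'a::{complex_normed_algebra_1,banach,comm_ring_1}"
  assumes ni: "\<not> (\<exists>y. x * y = 1)"
  shows "\<exists>\<phi>. (\<forall>a b. \<phi> (a + b) = \<phi> a + \<phi> b) \<and> (\<forall>a b. \<phi> (a * b) = \<phi> a * \<phi> b)
          \<and> (\<forall>c a. \<phi> (scaleC c a) = c * \<phi> a) \<and> \<phi> 1 = 1 \<and> (\<forall>a. cmod (\<phi> a) \<le> norm a) \<and> \<phi> x = 0"
proof -
  define A where "A = {I. bideal I \<and> (1::'a) \<notin> I \<and> x \<in> I}"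
  define P where "P = range (\<lambda>y. x * y)"
  have "bideal P" unfolding bideal_def P_def
  proof (intro conjI ballI allI)
    show "0 \<in> range (\<lambda>y. x * y)" by (metis mult_zero_right rangeI)
  next
    fix a b assume "a \<in> range (\<lambda>y. x * y)" "b \<in> range (\<lambda>y. x * y)"
    then obtain y y' where "a = x * y" "b = x * y'" by blast
    hence "a + b = x * (y + y')" by (simp add: algebra_simps)
    thus "a + b \<in> range (\<lambda>y. x * y)" by blast
  next
    fix a t assume "a \<in> range (\<lambda>y. x * y)"
    then obtain y where "a = x * y" by blast
    hence "t * a = x * (t * y)" by (simp add: algebra_simps)
    thus "t * a \<in> range (\<lambda>y. x * y)" by blast
  qed
  moreover have "1 \<notin> P" using ni P_def by auto
  moreover have "x \<in> P" unfolding P_def by (metis mult_1_right rangeI)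
  ultimately have PA: "P \<in> A" unfolding A_def by blast
  have ch: "\<exists>U\<in>A. \<forall>X\<in>C. X \<subseteq> U" if C: "C \<in> chains A" for C
  proof (cases "C = {}")
    case True then show ?thesis using PA by blast
  next
    case False
    have CA: "C \<subseteq> A" using C chainsD2 by blast
    have "\<Union>C \<in> A" unfolding A_def bideal_def
    proof (intro CollectI conjI ballI allI)
      obtain I where I: "I \<in> C" using False by blast
      hence "I \<in> A" using CA by blast
      hence "bideal I" "x \<in> I" unfolding A_def by auto
      thus "0 \<in> \<Union>C" "x \<in> \<Union>C" using I bideal_0 by blast+
      have "\<forall>I\<in>C. 1 \<notin> I" using CA unfolding A_def by blast
      thus "1 \<notin> \<Union>C" by blast
    next
      fix a b assume "a \<in> \<Union>C" "b \<in> \<Union>C"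
      then obtain I J where IJ: "I \<in> C" "J \<in> C" "a \<in> I" "b \<in> J" by blast
      have "I \<subseteq> J \<or> J \<subseteq> I" using chainsD[OF C IJ(1,2)] .
      thus "a + b \<in> \<Union>C"
      proof
        assume "I \<subseteq> J"
        moreover have "bideal J" using IJ CA unfolding A_def by blast
        ultimately have "a + b \<in> J" using IJ bideal_add by blast
        thus ?thesis using IJ by blast
      next
        assume "J \<subseteq> I"
        moreover have "bideal I" using IJ CA unfolding A_def by blast
        ultimately have "a + b \<in> I" using IJ bideal_add by blast
        thus ?thesis using IJ by blast
      qed
    next
      fix a t assume "a \<in> \<Union>C"
      then obtain I where "I \<in> C" "a \<in> I" by blast
      moreover have "bideal I" using \<open>I \<in> C\<close> CA unfolding A_def by blast
      ultimately have "t * a \<in> I" using bideal_multL by blast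
      thus "t * a \<in> \<Union>C" using \<open>I \<in> C\<close> by blast
    qed
    thus ?thesis by blast
  qed
  have "\<exists>M\<in>A. \<forall>X\<in>A. M \<subseteq> X \<longrightarrow> X = M" by (rule Zorn_Lemma2) (use ch in blast)
  then obtain M where M: "M \<in> A" "\<And>X. X \<in> A \<Longrightarrow> M \<subseteq> X \<Longrightarrow> X = M"
    by blast
  interpret maxideal M
  proof
    show "bideal M" "1 \<notin> M" using M A_def by auto
    fix J assume "bideal J" "M \<subseteq> J" "1 \<notin> J"
    moreover have "x \<in> J" using M A_def \<open>M \<subseteq> J\<close> by auto
    ultimately show "J = M" using M A_def by auto
  qed
  have "x \<in> M" using M A_def by auto
  show ?thesis
    apply (rule exI[of _ chr])
    apply (intro conjI allI)
    apply (rule chr_add)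
    apply (rule chr_mult)
    apply (rule chr_scaleC)
    apply (rule chr_one)
    apply (rule chr_bound)
    by (rule chr_M[OF \<open>x \<in> M\<close>])
qed


definition nrm :: "(nat \<Rightarrow> 'a::real_normed_vector) \<Rightarrow> real" where
  "nrm a = infsum (\<lambda>n. norm (a n)) {1..}"

lemma l1D: "a \<in> l1 \<Longrightarrow> a 0 = 0" "a \<in> l1 \<Longrightarrow> (\<lambda>n. norm (a n)) summable_on {1..}"
  by (auto simp: l1_def)

lemma l1I: "a 0 = 0 \<Longrightarrow> (\<lambda>n. norm (a n)) summable_on {1..} \<Longrightarrow> a \<in> l1"
  by (auto simp: l1_def)

lemma nrm_nonneg: "nrm a \<ge> 0" unfolding nrm_def by (rule infsum_nonneg) simp

lemma l1_comparison:
  assumes "a 0 = 0" "g summable_on {1..}" "\<And>n. n \<ge> 1 \<Longrightarrow> norm (a n) \<le> g n"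
  shows "a \<in> l1"
proof -
  have "(\<lambda>n. norm (a n)) summable_on {1..}"
    by (rule Infinite_Sum.abs_summable_on_comparison_test'[OF assms(2)]) (use assms(3) in auto)
  thus ?thesis using assms(1) by (simp add: l1_def)
qed

lemma l1_zero [simp]: "(\<lambda>_. 0) \<in> l1" by (simp add: l1_def)

lemma l1_add: "a \<in> l1 \<Longrightarrow> b \<in> l1 \<Longrightarrow> (\<lambda>n. a n + b n) \<in> l1"
  by (rule l1_comparison[where g="\<lambda>n. norm (a n) + norm (b n)"])
     (auto simp: l1_def intro: summable_on_add norm_triangle_ineq)

lemma l1_uminus: "a \<in> l1 \<Longrightarrow> (\<lambda>n. - a n) \<in> l1"
  by (simp add: l1_def)

lemma l1_diff: "a \<in> l1 \<Longrightarrow> b \<in> l1 \<Longrightarrow> (\<lambda>n. a n - b n) \<in> l1"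
  using l1_add[of a "\<lambda>n. - b n"] l1_uminus[of b] by simp

lemma l1_scaleR: "a \<in> l1 \<Longrightarrow> (\<lambda>n. scaleR r (a n)) \<in> l1"
  by (simp add: l1_def summable_on_cmult_right)

lemma sC_zero_right [simp]: "scaleC c (0::'a::complex_normed_algebra_1) = 0"
  by (metis sC_1 mult_zero_right)

lemma l1_scaleC: "a \<in> l1 \<Longrightarrow> (\<lambda>n. scaleC c (a n :: 'a::complex_normed_algebra_1)) \<in> l1"
  by (simp add: l1_def norm_scaleC summable_on_cmult_right)

lemma finite_support_summable:
  assumes "finite S" "\<And>n. n \<notin> S \<Longrightarrow> f n = 0"
  shows "f summable_on A"
proof -
  have "f summable_on (A \<inter> S)" using assms(1) by simp
  thus ?thesis by (rule summable_on_cong_neutral[THEN iffD1, rotated -1]) (use assms in auto)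
qed

lemma dunit_l1: "(dunit :: nat \<Rightarrow> 'a::{real_normed_algebra_1,comm_ring_1}) \<in> l1"
  by (rule l1I) (auto simp: dunit_def split: if_splits intro!: finite_support_summable[of "{1}"])

lemma nrm_dunit: "nrm (dunit :: nat \<Rightarrow> 'a::{real_normed_algebra_1,comm_ring_1}) = 1"
proof -
  have "nrm (dunit :: nat \<Rightarrow> 'a) = infsum (\<lambda>n. norm (dunit n :: 'a)) {1}"
    unfolding nrm_def by (rule infsum_cong_neutral) (auto simp: dunit_def)
  also have "\<dots> = 1" by (simp add: dunit_def)
  finally show ?thesis .
qed

lemma term_le_nrm:
  assumes "a \<in> l1" shows "norm (a n) \<le> nrm a"
proof (cases "n = 0")
  case True then show ?thesis using assms by (simp add: l1_def nrm_nonneg)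
next
  case False
  have "norm (a n) = infsum (\<lambda>n. norm (a n)) {n}" by simp
  also have "\<dots> \<le> nrm a" unfolding nrm_def
    by (rule infsum_mono2) (use assms False in \<open>auto simp: l1_def\<close>)
  finally show ?thesis .
qed

lemma finite_P: "n > 0 \<Longrightarrow> finite {(k,l). k * l = (n::nat)}"
proof -
  assume n: "n > 0"
  have "{(k,l). k * l = n} \<subseteq> {..n} \<times> {..n}"
  proof safe
    fix k l assume "n = k * l"
    thus "k \<le> k * l" "l \<le> k * l" using n by (auto simp: dvd_imp_le)
  qed
  thus ?thesis by (rule finite_subset) simp
qed

lemma Sigma_reindex:
  "((\<lambda>(n,p). F p) has_sum S) (Sigma {1..} (\<lambda>n. {(k,l). k * l = (n::nat)})) \<longleftrightarrow> (F has_sum S) ({1..} \<times> {1..})"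
  by (rule has_sum_reindex_bij_witness[where j = snd and i = "\<lambda>(k,l). (k*l,(k,l))"])
     (auto simp: Suc_le_eq)

lemma prod_has_sum:
  fixes f g :: "nat \<Rightarrow> 'a::{real_normed_algebra,banach}"
  assumes f: "(\<lambda>n. norm (f n)) summable_on {1..}" and g: "(\<lambda>n. norm (g n)) summable_on {1..}"
  shows "((\<lambda>n. \<Sum>(k,l)\<in>{(k,l). k*l = n}. f k * g l) has_sum (infsum f {1..} * infsum g {1..})) {1..}"
proof -
  define T where "T = ({1..} \<times> {1..} :: (nat \<times> nat) set)"
  define G :: "nat \<times> nat \<Rightarrow> real" where "G = (\<lambda>(k,l). norm (f k) * norm (g l))"
  have Gabs: "\<bar>G x\<bar> = G x" for x unfolding G_def by (auto simp: case_prod_beta)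
  have Gs: "(\<lambda>x. norm (G x)) summable_on T" unfolding T_def
  proof (subst Infinite_Sum.abs_summable_on_Sigma_iff, intro conjI ballI)
    fix k :: nat
    show "(\<lambda>l. norm (G (k, l))) summable_on {1..}"
      unfolding G_def using summable_on_cmult_right[OF g, of "norm (f k)"] by (simp add: abs_mult)
  next
    have eq: "infsum (\<lambda>l. norm (G (k, l))) {1..} = norm (f k) * infsum (\<lambda>l. norm (g l)) {1..}" for k
      unfolding G_def by (simp add: abs_mult infsum_cmult_right')
    moreover have "(\<lambda>k. norm (norm (f k) * infsum (\<lambda>l. norm (g l)) {1..})) summable_on {1..}"
      using summable_on_cmult_left[OF f, of "infsum (\<lambda>l. norm (g l)) {1..}"]
      by (simp add: abs_mult infsum_nonneg)
    ultimately show "(\<lambda>k. norm (infsum (\<lambda>l. norm (G (k, l))) {1..})) summable_on {1..}"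
      by (simp only: eq)
  qed
  define F :: "nat \<times> nat \<Rightarrow> 'a" where "F = (\<lambda>(k,l). f k * g l)"
  have "(\<lambda>x. norm (F x)) summable_on T"
  proof (rule Infinite_Sum.abs_summable_on_comparison_test'[of G])
    show "G summable_on T" using Gs by (simp add: Gabs)
    fix x assume "x \<in> T" thus "norm (F x) \<le> G x" unfolding F_def G_def by (cases x) (simp add: norm_mult_ineq)
  qed
  hence Fs: "F summable_on T" by (rule abs_summable_summable)
  have fs: "f summable_on {1..}" using f by (rule abs_summable_summable)
  have gs: "g summable_on {1..}" using g by (rule abs_summable_summable)
  have "infsum F T = infsum (\<lambda>k. infsum (\<lambda>l. F (k, l)) {1..}) {1..}"
    using Fs unfolding T_def by (rule infsum_Sigma_banach[symmetric])
  also have "\<dots> = infsum (\<lambda>k. f k * infsum g {1..}) {1..}"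
  proof (rule infsum_cong)
    fix k show "infsum (\<lambda>l. F (k, l)) {1..} = f k * infsum g {1..}"
      unfolding F_def using infsum_cmult_right[of "f k" g "{1..}"] gs by simp
  qed
  also have "\<dots> = infsum f {1..} * infsum g {1..}"
    using infsum_cmult_left[of "infsum g {1..}" f "{1..}"] fs by simp
  finally have "(F has_sum (infsum f {1..} * infsum g {1..})) T" using Fs has_sum_infsum by metis
  hence "((\<lambda>(n,p). F p) has_sum (infsum f {1..} * infsum g {1..})) (Sigma {1..} (\<lambda>n. {(k,l). k * l = n}))"
    unfolding T_def by (rule Sigma_reindex[THEN iffD2])
  moreover have "((\<lambda>y. (\<lambda>(n,p). F p) (n,y)) has_sum sum F {(k,l). k*l = n}) {(k,l). k*l = n}"
    if "n \<in> {1..}" for n using that by (simp add: finite_P)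
  ultimately have "((\<lambda>n. sum F {(k,l). k * l = n}) has_sum (infsum f {1..} * infsum g {1..})) {1..}"
    by (rule has_sum_SigmaD)
  thus ?thesis unfolding F_def .
qed


lemma dconv_alt: "n > 0 \<Longrightarrow> dconv a b n = (\<Sum>p\<in>{(k,l). k*l = n}. a (fst p) * b (snd p))"
  by (simp add: dconv_def case_prod_beta)

lemma dconv_0 [simp]: "dconv a b 0 = 0" by (simp add: dconv_def)

lemma dconv_comm: "dconv a b = dconv b a"
proof (rule ext)
  fix n :: nat
  show "dconv a b n = dconv b a n"
  proof (cases "n = 0")
    case True then show ?thesis by simp
  next
    case False
    hence n: "n > 0" by simp
    show ?thesis unfolding dconv_alt[OF n]
      by (rule sum.reindex_bij_witness[where i = "\<lambda>(k,l). (l,k)" and j = "\<lambda>(k,l). (l,k)"])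
         (auto simp: mult.commute)
  qed
qed

lemma dconv_assoc: "dconv (dconv a b) c = dconv a (dconv b c)"
proof (rule ext)
  fix n :: nat
  show "dconv (dconv a b) c n = dconv a (dconv b c) n"
  proof (cases "n = 0")
    case True then show ?thesis by simp
  next
    case False
    hence n: "n > 0" by simp
    define P where "P m = {(k,l). k*l = (m::nat)}" for m
    have fP: "finite (P m)" if "m > 0" for m unfolding P_def using finite_P[OF that] .
    define T where "T = {(i,j,k). i*j*k = (n::nat)}"
    have pos1: "fst p > 0" "snd p > 0" if "p \<in> P n" for p using that n unfolding P_def by auto
    have "dconv (dconv a b) c n = (\<Sum>p\<in>P n. (\<Sum>q\<in>P (fst p). a (fst q) * b (snd q)) * c (snd p))"
      unfolding dconv_alt[OF n] P_def[symmetric]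
    proof (rule sum.cong[OF refl])
      fix p assume p: "p \<in> P n"
      hence "fst p > 0" using pos1 by blast
      thus "dconv a b (fst p) * c (snd p) = (\<Sum>q\<in>P (fst p). a (fst q) * b (snd q)) * c (snd p)"
        by (simp add: dconv_alt P_def)
    qed
    also have "\<dots> = (\<Sum>p\<in>P n. \<Sum>q\<in>P (fst p). a (fst q) * b (snd q) * c (snd p))"
      by (simp add: sum_distrib_right)
    also have "\<dots> = (\<Sum>(p,q)\<in>Sigma (P n) (\<lambda>p. P (fst p)). a (fst q) * b (snd q) * c (snd p))"
      by (rule sum.Sigma) (use fP n pos1 in auto)
    also have "\<dots> = (\<Sum>(i,j,k)\<in>T. a i * b j * c k)"
      by (rule sum.reindex_bij_witness[where j = "\<lambda>(p,q). (fst q, snd q, snd p)"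
            and i = "\<lambda>(i,j,k). ((i*j,k),(i,j))"]) (auto simp: T_def P_def)
    finally have L: "dconv (dconv a b) c n = (\<Sum>(i,j,k)\<in>T. a i * b j * c k)" .
    have "dconv a (dconv b c) n = (\<Sum>p\<in>P n. a (fst p) * (\<Sum>q\<in>P (snd p). b (fst q) * c (snd q)))"
      unfolding dconv_alt[OF n] P_def[symmetric]
    proof (rule sum.cong[OF refl])
      fix p assume p: "p \<in> P n"
      hence "snd p > 0" using pos1 by blast
      thus "a (fst p) * dconv b c (snd p) = a (fst p) * (\<Sum>q\<in>P (snd p). b (fst q) * c (snd q))"
        by (simp add: dconv_alt P_def)
    qed
    also have "\<dots> = (\<Sum>p\<in>P n. \<Sum>q\<in>P (snd p). a (fst p) * b (fst q) * c (snd q))"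
      by (simp add: sum_distrib_left mult.assoc)
    also have "\<dots> = (\<Sum>(p,q)\<in>Sigma (P n) (\<lambda>p. P (snd p)). a (fst p) * b (fst q) * c (snd q))"
      by (rule sum.Sigma) (use fP n pos1 in auto)
    also have "\<dots> = (\<Sum>(i,j,k)\<in>T. a i * b j * c k)"
      by (rule sum.reindex_bij_witness[where j = "\<lambda>(p,q). (fst p, fst q, snd q)"
            and i = "\<lambda>(i,j,k). ((i,j*k),(j,k))"]) (auto simp: T_def P_def mult.assoc)
    finally show ?thesis using L by simp
  qed
qed

lemma dconv_add: "dconv (\<lambda>n. a n + b n) c = (\<lambda>n. dconv a c n + dconv b c n)"
  by (rule ext) (simp add: dconv_def sum.distrib distrib_right case_prod_beta)

lemma dconv_dunit: "a 0 = 0 \<Longrightarrow> dconv dunit a = a"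
proof (rule ext)
  fix n assume a0: "a 0 = 0"
  show "dconv dunit a n = a n"
  proof (cases "n = 0")
    case True then show ?thesis using a0 by simp
  next
    case False
    hence n: "n > 0" by simp
    have "dconv dunit a n = (\<Sum>p\<in>{(k,l). k*l = n}. if p = (1,n) then a n else 0)"
      unfolding dconv_alt[OF n] by (rule sum.cong) (auto simp: dunit_def)
    also have "\<dots> = a n" using finite_P[OF n] by (simp add: sum.delta')
    finally show ?thesis .
  qed
qed

lemma dconv_scaleR: "dconv (\<lambda>n. scaleR r (a n)) (b :: nat \<Rightarrow> 'a::{real_algebra,comm_ring_1}) = (\<lambda>n. scaleR r (dconv a b n))"
  by (rule ext) (simp add: dconv_def scaleR_sum_right case_prod_beta)

lemma scaleC_sum_right: "scaleC c (\<Sum>i\<in>A. f i) = (\<Sum>i\<in>A. scaleC c (f i :: 'a::complex_normed_algebra_1))"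
  by (subst sC_1) (simp add: sum_distrib_left sC_1[symmetric])

lemma dconv_scaleC: "dconv (\<lambda>n. scaleC c (a n)) (b :: nat \<Rightarrow> 'a::{complex_normed_algebra_1,comm_ring_1}) = (\<lambda>n. scaleC c (dconv a b n))"
  by (rule ext) (simp add: dconv_def scaleC_sum_right case_prod_beta mult_scaleC_left)

lemma dconv_l1:
  fixes a b :: "nat \<Rightarrow> 'a::{real_normed_algebra,banach,comm_ring_1}"
  assumes a: "a \<in> l1" and b: "b \<in> l1"
  shows "dconv a b \<in> l1" "nrm (dconv a b) \<le> nrm a * nrm b"
proof -
  have na: "(\<lambda>n. norm (norm (a n))) summable_on {1..}" using a by (simp add: l1_def)
  have nb: "(\<lambda>n. norm (norm (b n))) summable_on {1..}" using b by (simp add: l1_def)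
  have H: "((\<lambda>n. \<Sum>(k,l)\<in>{(k,l). k*l = n}. norm (a k) * norm (b l)) has_sum (nrm a * nrm b)) {1..}"
    using prod_has_sum[OF na nb] unfolding nrm_def .
  have bound: "norm (dconv a b n) \<le> (\<Sum>(k,l)\<in>{(k,l). k*l = n}. norm (a k) * norm (b l))" if "n \<ge> 1" for n
  proof -
    have "norm (dconv a b n) \<le> (\<Sum>(k,l)\<in>{(k,l). k*l = n}. norm (a k * b l))"
      unfolding dconv_def using that by (simp add: case_prod_beta norm_sum)
    also have "\<dots> \<le> (\<Sum>(k,l)\<in>{(k,l). k*l = n}. norm (a k) * norm (b l))"
      by (rule sum_mono) (auto simp: norm_mult_ineq)
    finally show ?thesis .
  qed
  show "dconv a b \<in> l1"
    by (rule l1_comparison[where g = "\<lambda>n. \<Sum>(k,l)\<in>{(k,l). k*l = n}. norm (a k) * norm (b l)"])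
       (use H bound in \<open>auto simp: summable_on_def\<close>)
  hence s: "(\<lambda>n. norm (dconv a b n)) summable_on {1..}" by (simp add: l1_def)
  have "nrm (dconv a b) \<le> infsum (\<lambda>n. \<Sum>(k,l)\<in>{(k,l). k*l = n}. norm (a k) * norm (b l)) {1..}"
    unfolding nrm_def by (rule infsum_mono[OF s]) (use H bound in \<open>auto simp: summable_on_def\<close>)
  also have "\<dots> = nrm a * nrm b" using H by (simp add: infsumI)
  finally show "nrm (dconv a b) \<le> nrm a * nrm b" .
qed


typedef (overloaded) ('a::"{complex_normed_algebra_1,banach,comm_ring_1}") l1s = "l1 :: (nat \<Rightarrow> 'a) set"
  morphisms l1seq Abs_l1s
  by (rule exI[of _ "\<lambda>_. 0"]) simp

setup_lifting type_definition_l1s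

lemma seq_l1: "l1seq x \<in> l1" by (rule l1seq)

lemma nrm_add_le: "a \<in> l1 \<Longrightarrow> b \<in> l1 \<Longrightarrow> nrm (\<lambda>n. a n + b n) \<le> nrm a + nrm b"
proof -
  assume a: "a \<in> l1" and b: "b \<in> l1"
  have "nrm (\<lambda>n. a n + b n) \<le> infsum (\<lambda>n. norm (a n) + norm (b n)) {1..}"
    unfolding nrm_def
    by (rule infsum_mono) (use l1_add[OF a b] a b in \<open>auto simp: l1_def intro: summable_on_add norm_triangle_ineq\<close>)
  also have "\<dots> = nrm a + nrm b" unfolding nrm_def by (rule infsum_add) (use a b in \<open>auto simp: l1_def\<close>)
  finally show ?thesis .
qed

lemma nrm_scaleR: "nrm (\<lambda>n. scaleR r (a n)) = \<bar>r\<bar> * nrm a"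
  unfolding nrm_def by (simp add: infsum_cmult_right')

lemma nrm_scaleC: "nrm (\<lambda>n. scaleC c (a n :: 'a::complex_normed_algebra_1)) = cmod c * nrm a"
  unfolding nrm_def by (simp add: norm_scaleC infsum_cmult_right')

lemma nrm_eq_0: "a \<in> l1 \<Longrightarrow> nrm a = 0 \<longleftrightarrow> a = (\<lambda>_. 0)"
proof
  assume a: "a \<in> l1" and "nrm a = 0"
  hence "norm (a n) \<le> 0" for n using term_le_nrm[OF a, of n] by simp
  thus "a = (\<lambda>_. 0)" by auto
qed (simp add: nrm_def)

instantiation l1s :: ("{complex_normed_algebra_1,banach,comm_ring_1}") comm_ring_1
begin
lift_definition zero_l1s :: "'a l1s" is "\<lambda>_. 0" by simp
lift_definition one_l1s :: "'a l1s" is dunit by (rule dunit_l1)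
lift_definition plus_l1s :: "'a l1s \<Rightarrow> 'a l1s \<Rightarrow> 'a l1s" is "\<lambda>a b n. a n + b n" by (rule l1_add)
lift_definition minus_l1s :: "'a l1s \<Rightarrow> 'a l1s \<Rightarrow> 'a l1s" is "\<lambda>a b n. a n - b n" by (rule l1_diff)
lift_definition uminus_l1s :: "'a l1s \<Rightarrow> 'a l1s" is "\<lambda>a n. - a n" by (rule l1_uminus)
lift_definition times_l1s :: "'a l1s \<Rightarrow> 'a l1s \<Rightarrow> 'a l1s" is dconv by (rule dconv_l1)
instance
proof
  fix a b c :: "'a l1s"
  show "a * b * c = a * (b * c)" by transfer (rule dconv_assoc)
  show "a * b = b * a" by transfer (rule dconv_comm)
  show "1 * a = a" by transfer (simp add: dconv_dunit l1_def)
  show "a + b + c = a + (b + c)" by transfer (simp add: add.assoc)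
  show "a + b = b + a" by transfer (simp add: add.commute)
  show "0 + a = a" by transfer simp
  show "- a + a = 0" by transfer simp
  show "a - b = a + - b" by transfer simp
  show "(a + b) * c = a * c + b * c" by transfer (rule dconv_add)
  show "(0::'a l1s) \<noteq> 1" by transfer (auto simp: dunit_def fun_eq_iff)
qed
end

instantiation l1s :: ("{complex_normed_algebra_1,banach,comm_ring_1}") real_normed_algebra_1
begin
lift_definition scaleR_l1s :: "real \<Rightarrow> 'a l1s \<Rightarrow> 'a l1s" is "\<lambda>r a n. scaleR r (a n)" by (rule l1_scaleR)
lift_definition norm_l1s :: "'a l1s \<Rightarrow> real" is nrm .
definition dist_l1s :: "'a l1s \<Rightarrow> 'a l1s \<Rightarrow> real" where "dist_l1s x y = norm (x - y)"
definition sgn_l1s :: "'a l1s \<Rightarrow> 'a l1s" where "sgn_l1s x = scaleR (inverse (norm x)) x"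
definition uniformity_l1s :: "('a l1s \<times> 'a l1s) filter" where
  "uniformity_l1s = (INF e\<in>{0<..}. principal {(x, y). dist x y < e})"
definition open_l1s :: "'a l1s set \<Rightarrow> bool" where
  "open_l1s U = (\<forall>x\<in>U. \<forall>\<^sub>F (x', y) in uniformity. x' = x \<longrightarrow> y \<in> U)"
instance
proof
  fix a b :: "'a l1s" and r s :: real
  show "r *\<^sub>R (a + b) = r *\<^sub>R a + r *\<^sub>R b" by transfer (simp add: scaleR_add_right)
  show "(r + s) *\<^sub>R a = r *\<^sub>R a + s *\<^sub>R a" by transfer (simp add: scaleR_add_left)
  show "r *\<^sub>R s *\<^sub>R a = (r * s) *\<^sub>R a" by transfer simp
  show "1 *\<^sub>R a = a" by transfer simp
  show "r *\<^sub>R a * b = r *\<^sub>R (a * b)" by transfer (rule dconv_scaleR)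
  show "a * r *\<^sub>R b = r *\<^sub>R (a * b)" by transfer (metis dconv_comm dconv_scaleR)
  show "dist a b = norm (a - b)" by (rule dist_l1s_def)
  show "sgn a = inverse (norm a) *\<^sub>R a" by (rule sgn_l1s_def)
  show "uniformity = (INF e\<in>{0<..}. principal {(x::'a l1s, y). dist x y < e})" by (rule uniformity_l1s_def)
  show "open U = (\<forall>x\<in>U. \<forall>\<^sub>F (x', y) in uniformity. x' = x \<longrightarrow> y \<in> U)" for U :: "'a l1s set" by (rule open_l1s_def)
  show "(norm a = 0) = (a = 0)" by transfer (simp add: nrm_eq_0)
  show "norm (a + b) \<le> norm a + norm b" by transfer (rule nrm_add_le)
  show "norm (r *\<^sub>R a) = \<bar>r\<bar> * norm a" by transfer (rule nrm_scaleR)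
  show "norm (a * b) \<le> norm a * norm b" by transfer (rule dconv_l1(2))
  show "norm (1::'a l1s) = 1" by transfer (rule nrm_dunit)
qed
end


lemma norm_l1s_diff: "norm (X - Y) = nrm (\<lambda>n. l1seq X n - l1seq Y n)"
  by (simp add: norm_l1s.rep_eq minus_l1s.rep_eq)

lemma fin_sum_le_nrm:
  assumes "a \<in> l1" "finite F" "F \<subseteq> {1..}"
  shows "(\<Sum>n\<in>F. norm (a n)) \<le> nrm a"
proof -
  have "(\<Sum>n\<in>F. norm (a n)) = infsum (\<lambda>n. norm (a n)) F" using assms by simp
  also have "\<dots> \<le> nrm a" unfolding nrm_def
    by (rule infsum_mono2) (use assms in \<open>auto simp: l1_def\<close>)
  finally show ?thesis .
qed

lemma l1s_complete:
  fixes X :: "nat \<Rightarrow> 'a::{complex_normed_algebra_1,banach,comm_ring_1} l1s"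
  assumes C: "Cauchy X"
  shows "convergent X"
proof -
  define x where "x j = l1seq (X j)" for j
  have xl1: "x j \<in> l1" for j unfolding x_def by (rule l1seq)
  have nd: "norm (X j - X k) = nrm (\<lambda>n. x j n - x k n)" for j k unfolding x_def by (rule norm_l1s_diff)
  have pw: "norm (x j n - x k n) \<le> norm (X j - X k)" for j k n
    unfolding nd by (rule term_le_nrm[OF l1_diff[OF xl1 xl1]])
  have "Cauchy (\<lambda>j. x j n)" for n
  proof (rule metric_CauchyI)
    fix e :: real assume "e > 0"
    then obtain N where N: "\<And>j k. j \<ge> N \<Longrightarrow> k \<ge> N \<Longrightarrow> dist (X j) (X k) < e"
      using C metric_CauchyD by blast
    have "dist (x m n) (x n' n) < e" if "m \<ge> N" "n' \<ge> N" for m n'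
    proof -
      have "dist (x m n) (x n' n) \<le> dist (X m) (X n')" unfolding dist_norm by (rule pw)
      also have "\<dots> < e" using N that by blast
      finally show ?thesis .
    qed
    thus "\<exists>M. \<forall>m\<ge>M. \<forall>n'\<ge>M. dist (x m n) (x n' n) < e" by blast
  qed
  hence "convergent (\<lambda>j. x j n)" for n by (rule Cauchy_convergent)
  then obtain f where f: "\<And>n. (\<lambda>j. x j n) \<longlonglongrightarrow> f n"
    unfolding convergent_def by metis
  have f0: "f 0 = 0"
  proof -
    have "(\<lambda>j. x j 0) = (\<lambda>_. 0)" using xl1 by (simp add: l1_def fun_eq_iff)
    hence "(\<lambda>j. (0::'a)) \<longlonglongrightarrow> f 0" using f[of 0] by simp
    thus ?thesis by (rule LIMSEQ_unique[OF _ tendsto_const])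
  qed
  have main: "\<exists>N. \<forall>j\<ge>N. (\<lambda>n. norm (x j n - f n)) summable_on {1..} \<and> infsum (\<lambda>n. norm (x j n - f n)) {1..} \<le> e"
    if e: "e > 0" for e
  proof -
    obtain N where N: "\<And>j k. j \<ge> N \<Longrightarrow> k \<ge> N \<Longrightarrow> dist (X j) (X k) < e"
      using C metric_CauchyD e by blast
    have fs: "(\<Sum>n\<in>F. norm (x j n - f n)) \<le> e" if j: "j \<ge> N" and F: "finite F" "F \<subseteq> {1..}" for j F
    proof -
      have "(\<lambda>k. \<Sum>n\<in>F. norm (x j n - x k n)) \<longlonglongrightarrow> (\<Sum>n\<in>F. norm (x j n - f n))"
        by (intro tendsto_sum tendsto_norm tendsto_diff tendsto_const f)
      moreover have "\<exists>M. \<forall>k\<ge>M. (\<Sum>n\<in>F. norm (x j n - x k n)) \<le> e"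
      proof (intro exI allI impI)
        fix k assume k: "k \<ge> N"
        have "(\<Sum>n\<in>F. norm (x j n - x k n)) \<le> nrm (\<lambda>n. x j n - x k n)"
          by (rule fin_sum_le_nrm[OF l1_diff[OF xl1 xl1] F])
        also have "\<dots> = dist (X j) (X k)" by (simp add: dist_norm nd)
        also have "\<dots> < e" using N j k by blast
        finally show "(\<Sum>n\<in>F. norm (x j n - x k n)) \<le> e" by simp
      qed
      ultimately show ?thesis by (rule LIMSEQ_le_const2)
    qed
    have "(\<lambda>n. norm (x j n - f n)) summable_on {1..} \<and> infsum (\<lambda>n. norm (x j n - f n)) {1..} \<le> e"
      if j: "j \<ge> N" for j
    proof
      show s: "(\<lambda>n. norm (x j n - f n)) summable_on {1..}"
        by (rule nonneg_bdd_above_summable_on) (use fs j in \<open>auto intro!: bdd_aboveI2\<close>)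
      show "infsum (\<lambda>n. norm (x j n - f n)) {1..} \<le> e"
        by (rule infsum_le_finite_sums[OF s]) (use fs j in auto)
    qed
    thus ?thesis by blast
  qed
  obtain N1 where N1: "\<And>j. j \<ge> N1 \<Longrightarrow> (\<lambda>n. norm (x j n - f n)) summable_on {1..}"
    using main[of 1] by auto
  have fl1: "f \<in> l1"
  proof (rule l1_comparison[where a = f and g = "\<lambda>n. norm (x N1 n) + norm (x N1 n - f n)"])
    show "f 0 = 0" by (rule f0)
    show "(\<lambda>n. norm (x N1 n) + norm (x N1 n - f n)) summable_on {1..}"
      by (rule summable_on_add) (use xl1 N1 in \<open>auto simp: l1_def\<close>)
    fix n
    have "norm (x N1 n - (x N1 n - f n)) \<le> norm (x N1 n) + norm (x N1 n - f n)" by (rule norm_triangle_ineq4)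
    thus "norm (f n) \<le> norm (x N1 n) + norm (x N1 n - f n)" by simp
  qed
  have "X \<longlonglongrightarrow> Abs_l1s f"
  proof (rule LIMSEQ_I)
    fix r :: real assume r: "r > 0"
    obtain N where N: "\<And>j. j \<ge> N \<Longrightarrow> infsum (\<lambda>n. norm (x j n - f n)) {1..} \<le> r / 2"
      using main[of "r/2"] r by auto
    have "norm (X j - Abs_l1s f) < r" if "j \<ge> N" for j
    proof -
      have "norm (X j - Abs_l1s f) = nrm (\<lambda>n. x j n - f n)"
        using fl1 unfolding x_def by (simp add: norm_l1s_diff Abs_l1s_inverse)
      also have "\<dots> \<le> r / 2" unfolding nrm_def using N that by simp
      finally show ?thesis using r by simp
    qed
    thus "\<exists>no. \<forall>n\<ge>no. norm (X n - Abs_l1s f) < r" by blast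
  qed
  thus ?thesis by (rule convergentI)
qed

instance l1s :: ("{complex_normed_algebra_1,banach,comm_ring_1}") banach
  by standard (rule l1s_complete)

instantiation l1s :: ("{complex_normed_algebra_1,banach,comm_ring_1}") complex_normed_algebra_1
begin
lift_definition scaleC_l1s :: "complex \<Rightarrow> 'a l1s \<Rightarrow> 'a l1s" is "\<lambda>c a n. scaleC c (a n)" by (rule l1_scaleC)
instance
proof
  fix a b :: "'a l1s" and c d :: complex and r :: real
  show "scaleC c (a + b) = scaleC c a + scaleC c b" by transfer (simp add: scaleC_add_right)
  show "scaleC (c + d) a = scaleC c a + scaleC d a" by transfer (simp add: scaleC_add_left)
  show "scaleC c (scaleC d a) = scaleC (c * d) a" by transfer (simp add: scaleC_scaleC)
  show "scaleC 1 a = a" by transfer simp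
  show "scaleC (complex_of_real r) a = r *\<^sub>R a" by transfer (simp add: scaleC_of_real)
  show "norm (scaleC c a) = cmod c * norm a" by transfer (rule nrm_scaleC)
  show "scaleC c a * b = scaleC c (a * b)" by transfer (rule dconv_scaleC)
  show "a * scaleC c b = scaleC c (a * b)" by transfer (metis dconv_comm dconv_scaleC)
qed
end


definition single :: "nat \<Rightarrow> 'a::zero \<Rightarrow> nat \<Rightarrow> 'a" where
  "single n x m = (if m = n \<and> m \<noteq> 0 then x else 0)"

lemma single_l1: "single n (x::'a::real_normed_vector) \<in> l1"
  by (rule l1I) (auto simp: single_def split: if_splits intro!: finite_support_summable[of "{n}"])

lemma nrm_single: "nrm (single n (x::'a::real_normed_vector)) = (if n = 0 then 0 else norm x)"
proof -
  have "nrm (single n x) = infsum (\<lambda>m. norm (single n x m)) ({1..} \<inter> {n})"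
    unfolding nrm_def by (rule infsum_cong_neutral) (auto simp: single_def)
  also have "\<dots> = (if n = 0 then 0 else norm x)" by (cases "n = 0") (auto simp: single_def)
  finally show ?thesis .
qed

lemma dconv_single:
  assumes "m \<ge> 1" "n \<ge> 1"
  shows "dconv (single m x) (single n y) = single (m*n) (x*y :: 'a::comm_ring_1)"
proof (rule ext)
  fix N :: nat
  show "dconv (single m x) (single n y) N = single (m*n) (x*y) N"
  proof (cases "N = 0")
    case True then show ?thesis by (simp add: single_def)
  next
    case False
    hence N: "N > 0" by simp
    have "dconv (single m x) (single n y) N = (\<Sum>p\<in>{(k,l). k*l = N}. if p = (m,n) then x*y else 0)"
      unfolding dconv_alt[OF N] by (rule sum.cong) (use assms in \<open>auto simp: single_def\<close>)
    also have "\<dots> = (if (m,n) \<in> {(k,l). k*l = N} then x*y else 0)"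
      using finite_P[OF N] by (simp add: sum.delta')
    also have "\<dots> = single (m*n) (x*y) N" using N by (auto simp: single_def)
    finally show ?thesis .
  qed
qed

context
  fixes a :: "nat \<Rightarrow> 'a::{complex_normed_algebra_1,banach,comm_ring_1}"
begin

lemma Abs_mult: "f \<in> l1 \<Longrightarrow> g \<in> l1 \<Longrightarrow> Abs_l1s f * Abs_l1s g = (Abs_l1s (dconv f g) :: 'a l1s)"
  by (simp add: times_l1s.abs_eq eq_onp_def)

lemma Abs_add: "f \<in> l1 \<Longrightarrow> g \<in> l1 \<Longrightarrow> Abs_l1s f + Abs_l1s g = (Abs_l1s (\<lambda>n. f n + g n) :: 'a l1s)"
  by (simp add: plus_l1s.abs_eq eq_onp_def)

lemma Abs_scaleC: "f \<in> l1 \<Longrightarrow> scaleC c (Abs_l1s f) = (Abs_l1s (\<lambda>n. scaleC c (f n)) :: 'a l1s)"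
  by (simp add: scaleC_l1s.abs_eq eq_onp_def)

lemma Abs_one: "(1 :: 'a l1s) = Abs_l1s dunit"
  by (simp add: one_l1s.abs_eq eq_onp_def dunit_l1)

lemma single_add: "single n (x + y) = (\<lambda>m. single n x m + single n (y::'a) m)"
  by (auto simp: single_def)

lemma single_scaleC: "single n (scaleC c x) = (\<lambda>m. scaleC c (single n (x::'a) m))"
  by (auto simp: single_def)

lemma single_dunit: "single 1 (1::'a) = dunit"
  by (auto simp: single_def dunit_def)

lemma l1seq_sum: "l1seq (sum f F) = (\<lambda>m. \<Sum>n\<in>F. l1seq (f n :: 'a l1s) m)"
  by (induction F rule: infinite_finite_induct) (auto simp: zero_l1s.rep_eq plus_l1s.rep_eq)

lemma l1s_has_sum:
  assumes a: "a \<in> l1"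
  shows "((\<lambda>n. Abs_l1s (single n (a n)) :: 'a l1s) has_sum Abs_l1s a) {1..}"
proof -
  have H: "((\<lambda>n. norm (a n)) has_sum nrm a) {1..}" using a by (simp add: l1_def nrm_def)
  have key: "dist (sum (\<lambda>n. Abs_l1s (single n (a n)) :: 'a l1s) F) (Abs_l1s a) = nrm a - (\<Sum>n\<in>F. norm (a n))"
    if F: "finite F" "F \<subseteq> {1..}" for F
  proof -
    have seqF: "l1seq (sum (\<lambda>n. Abs_l1s (single n (a n)) :: 'a l1s) F) = (\<lambda>m. if m \<in> F then a m else 0)"
    proof -
      have "l1seq (sum (\<lambda>n. Abs_l1s (single n (a n)) :: 'a l1s) F) = (\<lambda>m. \<Sum>n\<in>F. single n (a n) m)"
        by (simp add: l1seq_sum Abs_l1s_inverse single_l1)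
      also have "\<dots> = (\<lambda>m. if m \<in> F then a m else 0)"
      proof (rule ext)
        fix m
        have "(\<Sum>n\<in>F. single n (a n) m) = (\<Sum>n\<in>F. if n = m then (if m \<noteq> 0 then a m else 0) else 0)"
          by (rule sum.cong) (auto simp: single_def)
        also have "\<dots> = (if m \<in> F then a m else 0)" using F by (auto simp: sum.delta)
        finally show "(\<Sum>n\<in>F. single n (a n) m) = (if m \<in> F then a m else 0)" .
      qed
      finally show ?thesis .
    qed
    have "dist (sum (\<lambda>n. Abs_l1s (single n (a n)) :: 'a l1s) F) (Abs_l1s a)
          = nrm (\<lambda>m. (if m \<in> F then a m else 0) - a m)"
      by (simp add: dist_norm norm_l1s_diff seqF Abs_l1s_inverse a)
    also have "\<dots> = infsum (\<lambda>m. norm (a m)) ({1..} - F)"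
      unfolding nrm_def by (rule infsum_cong_neutral) auto
    also have "\<dots> = nrm a - (\<Sum>n\<in>F. norm (a n))"
      by (rule infsumI, rule has_sum_Diff[OF H]) (use F in auto)
    finally show ?thesis .
  qed
  show ?thesis unfolding has_sum_def
  proof (rule tendstoI)
    fix e :: real assume e: "e > 0"
    have "\<forall>\<^sub>F F in finite_subsets_at_top {1..}. dist (\<Sum>n\<in>F. norm (a n)) (nrm a) < e"
      using H e unfolding has_sum_def by (rule tendstoD)
    moreover have "\<forall>\<^sub>F F in finite_subsets_at_top {1..}. finite F \<and> F \<subseteq> {1..}"
      by (rule eventually_finite_subsets_at_top_weakI) simp
    ultimately show "\<forall>\<^sub>F F in finite_subsets_at_top {1..}. dist (sum (\<lambda>n. Abs_l1s (single n (a n)) :: 'a l1s) F) (Abs_l1s a) < e"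
    proof eventually_elim
      case (elim F)
      thus ?case using key[of F] by (simp add: dist_real_def)
    qed
  qed
qed

end


lemma semichar_one: "semicharacter chi \<Longrightarrow> chi 1 = 1"
proof -
  assume s: "semicharacter chi"
  then obtain n where n: "n \<ge> 1" "chi n \<noteq> 0" unfolding semicharacter_def by blast
  have "chi n = chi 1 * chi n" using s n unfolding semicharacter_def by (metis mult_1 order_refl)
  thus ?thesis using n by simp
qed

lemma semichar_bound: "semicharacter chi \<Longrightarrow> \<exists>B\<ge>0. \<forall>n\<ge>1. cmod (chi n) \<le> B"
  unfolding semicharacter_def by (meson max.cobounded1 max.coboundedI2 order.trans)

lemma semichar_mult: "semicharacter chi \<Longrightarrow> m \<ge> 1 \<Longrightarrow> n \<ge> 1 \<Longrightarrow> chi (m * n) = chi m * chi n"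
  unfolding semicharacter_def by blast

lemma gtrans_abs:
  fixes a :: "nat \<Rightarrow> 'a::{complex_normed_algebra_1,banach,comm_ring_1}"
  assumes a: "a \<in> l1" and s: "semicharacter chi"
  shows "(\<lambda>n. norm (scaleC (chi n) (a n))) summable_on {1..}"
proof -
  obtain B where B: "B \<ge> 0" "\<And>n. n \<ge> 1 \<Longrightarrow> cmod (chi n) \<le> B" using semichar_bound[OF s] by blast
  show ?thesis
  proof (rule Infinite_Sum.abs_summable_on_comparison_test'[where g = "\<lambda>n. B * norm (a n)"])
    show "(\<lambda>n. B * norm (a n)) summable_on {1..}" using a by (simp add: l1_def summable_on_cmult_right)
    fix n :: nat assume "n \<in> {1..}"
    thus "norm (scaleC (chi n) (a n)) \<le> B * norm (a n)" using B by (simp add: norm_scaleC mult_right_mono)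
  qed
qed

lemma gtrans_has_sum:
  fixes a :: "nat \<Rightarrow> 'a::{complex_normed_algebra_1,banach,comm_ring_1}"
  assumes a: "a \<in> l1" and s: "semicharacter chi"
  shows "((\<lambda>n. scaleC (chi n) (a n)) has_sum gtrans a chi) {1..}"
  unfolding gtrans_def using abs_summable_summable[OF gtrans_abs[OF a s]] by (rule has_sum_infsum)

lemma gtrans_mult:
  fixes a b :: "nat \<Rightarrow> 'a::{complex_normed_algebra_1,banach,comm_ring_1}"
  assumes a: "a \<in> l1" and b: "b \<in> l1" and s: "semicharacter chi"
  shows "gtrans (dconv a b) chi = gtrans a chi * gtrans b chi"
proof -
  define f where "f n = scaleC (chi n) (a n)" for n
  define g where "g n = scaleC (chi n) (b n)" for n
  have H: "((\<lambda>n. \<Sum>(k,l)\<in>{(k,l). k*l = n}. f k * g l) has_sum (infsum f {1..} * infsum g {1..})) {1..}"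
    by (rule prod_has_sum) (use gtrans_abs[OF a s] gtrans_abs[OF b s] in \<open>simp_all add: f_def g_def\<close>)
  have eq: "scaleC (chi n) (dconv a b n) = (\<Sum>(k,l)\<in>{(k,l). k*l = n}. f k * g l)" if n: "n \<in> {1..}" for n
  proof -
    have "scaleC (chi n) (dconv a b n) = (\<Sum>(k,l)\<in>{(k,l). k*l = n}. scaleC (chi n) (a k * b l))"
      using n by (simp add: dconv_def scaleC_sum_right case_prod_beta)
    also have "\<dots> = (\<Sum>(k,l)\<in>{(k,l). k*l = n}. f k * g l)"
    proof (rule sum.cong[OF refl])
      fix p assume p: "p \<in> {(k,l). k*l = n}"
      obtain k l where kl: "p = (k,l)" "k * l = n" using p by auto
      hence "k \<ge> 1" "l \<ge> 1" using n by (auto simp: Suc_le_eq)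
      hence "chi n = chi k * chi l" using semichar_mult[OF s, of k l] kl by simp
      thus "(case p of (k, l) \<Rightarrow> scaleC (chi n) (a k * b l)) = (case p of (k, l) \<Rightarrow> f k * g l)"
        unfolding kl f_def g_def by (simp add: mult_scaleC_left mult_scaleC_right scaleC_scaleC mult.commute)
    qed
    finally show ?thesis .
  qed
  have "gtrans (dconv a b) chi = infsum (\<lambda>n. \<Sum>(k,l)\<in>{(k,l). k*l = n}. f k * g l) {1..}"
    unfolding gtrans_def by (rule infsum_cong) (rule eq)
  also have "\<dots> = infsum f {1..} * infsum g {1..}" using H by (rule infsumI)
  finally show ?thesis unfolding gtrans_def f_def g_def .
qed

lemma gtrans_dunit:
  assumes s: "semicharacter chi"
  shows "gtrans (dunit :: nat \<Rightarrow> 'a::{complex_normed_algebra_1,banach,comm_ring_1}) chi = 1"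
proof -
  have "gtrans (dunit :: nat \<Rightarrow> 'a) chi = infsum (\<lambda>n. scaleC (chi n) (dunit n :: 'a)) {1}"
    unfolding gtrans_def by (rule infsum_cong_neutral) (auto simp: dunit_def)
  also have "\<dots> = 1" using semichar_one[OF s] by (simp add: dunit_def)
  finally show ?thesis .
qed


theorem mainTheorem2:
  fixes a :: "nat \<Rightarrow> 'a::{complex_normed_algebra_1,banach,comm_ring_1}"
  assumes "a \<in> l1"
  shows "l1_invertible a \<longleftrightarrow>
    (\<forall>chi. semicharacter chi \<longrightarrow> (\<exists>b. b * gtrans a chi = 1 \<and> gtrans a chi * b = 1))"
proof
  note a = \<open>a \<in> l1\<close>
  assume "l1_invertible a"
  then obtain b where b: "b \<in> l1" "dconv a b = dunit" unfolding l1_invertible_def by blast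
  show "\<forall>chi. semicharacter chi \<longrightarrow> (\<exists>b. b * gtrans a chi = 1 \<and> gtrans a chi * b = 1)"
  proof (intro allI impI)
    fix chi :: "nat \<Rightarrow> complex" assume s: "semicharacter chi"
    have "gtrans a chi * gtrans b chi = gtrans (dconv a b) chi" by (rule gtrans_mult[OF a b(1) s, symmetric])
    also have "\<dots> = 1" unfolding b(2) by (rule gtrans_dunit[OF s])
    finally have "gtrans a chi * gtrans b chi = 1" .
    thus "\<exists>b'. b' * gtrans a chi = 1 \<and> gtrans a chi * b' = 1" by (metis mult.commute)
  qed
next
  note a = \<open>a \<in> l1\<close>
  assume H: "\<forall>chi. semicharacter chi \<longrightarrow> (\<exists>b. b * gtrans a chi = 1 \<and> gtrans a chi * b = 1)"
  show "l1_invertible a"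
  proof (rule ccontr)
    assume ni: "\<not> l1_invertible a"
    define A where "A = (Abs_l1s a :: 'a l1s)"
    have noinv: "\<not> (\<exists>Y. A * Y = 1)"
    proof
      assume "\<exists>Y. A * Y = 1"
      then obtain Y where Y: "A * Y = 1" by blast
      hence "l1seq (A * Y) = l1seq (1 :: 'a l1s)" by simp
      hence "dconv a (l1seq Y) = dunit"
        unfolding A_def by (simp add: times_l1s.rep_eq one_l1s.rep_eq Abs_l1s_inverse a)
      hence "l1_invertible a" unfolding l1_invertible_def using l1seq[of Y] dconv_comm by metis
      thus False using ni by simp
    qed
    obtain Phi :: "'a l1s \<Rightarrow> complex" where
      Phi_add: "\<And>x y. Phi (x + y) = Phi x + Phi y" and
      Phi_mult: "\<And>x y. Phi (x * y) = Phi x * Phi y" and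
      Phi_scaleC: "\<And>c x. Phi (scaleC c x) = c * Phi x" and
      Phi_one: "Phi 1 = 1" and
      Phi_bound: "\<And>x. cmod (Phi x) \<le> norm x" and
      Phi_A: "Phi A = 0"
      using gelfand_char[OF noinv] by blast
    define S where "S n x = (Abs_l1s (single n x) :: 'a l1s)" for n x
    have normS: "norm (S n x) = (if n = 0 then 0 else norm x)" for n x
      unfolding S_def by (simp add: norm_l1s.rep_eq Abs_l1s_inverse single_l1 nrm_single)
    have Smult: "S m x * S n y = S (m*n) (x*y)" if "m \<ge> 1" "n \<ge> 1" for m n x y
      unfolding S_def by (simp add: Abs_mult single_l1 dconv_single[OF that])
    have Sadd: "S n (x + y) = S n x + S n y" for n x y
      unfolding S_def by (simp add: Abs_add single_l1 single_add)
    have SscaleC: "S n (scaleC c x) = scaleC c (S n x)" for n c x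
      unfolding S_def by (simp add: Abs_scaleC single_l1 single_scaleC)
    have S1: "S 1 1 = 1" unfolding S_def single_dunit Abs_one ..
    define ph where "ph x = Phi (S 1 x)" for x
    define ch where "ch n = Phi (S n 1)" for n
    have phi_mult: "ph (x * y) = ph x * ph y" for x y
      unfolding ph_def using Smult[of 1 1 x y, symmetric] Phi_mult by simp
    have phi_one: "ph 1 = 1" unfolding ph_def S1 Phi_one ..
    have phi_add: "ph (x + y) = ph x + ph y" for x y unfolding ph_def Sadd Phi_add ..
    have phi_scaleC: "ph (scaleC c x) = c * ph x" for c x unfolding ph_def SscaleC Phi_scaleC ..
    have phi_bound: "cmod (ph x) \<le> norm x" for x
      unfolding ph_def using Phi_bound[of "S 1 x"] normS[of 1 x] by simp
    have semi: "semicharacter ch" unfolding semicharacter_def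
    proof (intro conjI exI allI impI)
      show "1 \<ge> (1::nat)" by simp
      show "ch 1 \<noteq> 0" unfolding ch_def S1 Phi_one by simp
      fix n :: nat assume "n \<ge> 1"
      show "cmod (ch n) \<le> 1" unfolding ch_def using Phi_bound[of "S n 1"] normS[of n 1] by (simp split: if_splits)
    next
      fix m n :: nat assume "m \<ge> 1" "n \<ge> 1"
      thus "ch (m * n) = ch m * ch n" unfolding ch_def using Smult[of m n 1 1, symmetric] Phi_mult by simp
    qed
    obtain b where b: "b * gtrans a ch = 1" using H semi by blast
    have "ph b * ph (gtrans a ch) = 1" using phi_mult[of b "gtrans a ch"] b phi_one by simp
    hence nz: "ph (gtrans a ch) \<noteq> 0" by auto
    have blPhi: "bounded_linear Phi"
    proof (rule bounded_linear_intro[where K = 1])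
      show "Phi (x + y) = Phi x + Phi y" for x y by (rule Phi_add)
      show "Phi (r *\<^sub>R x) = r *\<^sub>R Phi x" for r x
        using Phi_scaleC[of "complex_of_real r" x] by (simp add: scaleC_of_real scaleR_conv_of_real)
      show "norm (Phi x) \<le> norm x * 1" for x using Phi_bound by simp
    qed
    have blphi: "bounded_linear ph"
    proof (rule bounded_linear_intro[where K = 1])
      show "ph (x + y) = ph x + ph y" for x y by (rule phi_add)
      show "ph (r *\<^sub>R x) = r *\<^sub>R ph x" for r x
        using phi_scaleC[of "complex_of_real r" x] by (simp add: scaleC_of_real scaleR_conv_of_real)
      show "norm (ph x) \<le> norm x * 1" for x using phi_bound by simp
    qed
    have h1: "((\<lambda>n. Phi (S n (a n))) has_sum Phi A) {1..}"
      unfolding S_def A_def by (rule has_sum_bounded_linear[OF blPhi l1s_has_sum[OF a]])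
    have "((\<lambda>n. ph (scaleC (ch n) (a n))) has_sum ph (gtrans a ch)) {1..}"
      by (rule has_sum_bounded_linear[OF blphi gtrans_has_sum[OF a semi]])
    moreover have "ph (scaleC (ch n) (a n)) = Phi (S n (a n))" if "n \<in> {1..}" for n
    proof -
      have "S n (a n) = S 1 (a n) * S n 1" using Smult[of 1 n "a n" 1] that by simp
      hence "Phi (S n (a n)) = ph (a n) * ch n" unfolding ph_def ch_def using Phi_mult by simp
      thus ?thesis by (simp add: phi_scaleC mult.commute)
    qed
    ultimately have h2: "((\<lambda>n. Phi (S n (a n))) has_sum ph (gtrans a ch)) {1..}"
      by (rule has_sum_cong[THEN iffD1, rotated]) simp
    have "ph (gtrans a ch) = Phi A" using h1 h2 by (rule has_sum_unique[rotated])
    thus False using Phi_A nz by simp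
  qed
qed


end
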